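(* Let $a\le A<B$, let $K$ be a covariance kernel on $[a,B]\times[a,B]$ and $f:[a,B]\to\mathbb{R}^m$, and consider the regression model $y(t)=\theta^Tf(t)+\epsilon(t)$ with zero-mean errors with covariance $K$, observed on $\mathcal{T}=[A,B]$. Let $\zeta_0$ be a signed $\mathbb{R}^m$-valued measure on $\mathcal{T}$ with $\int_A^BK(t,s)\zeta_0(dt)=f(s)$ for all $s\in\mathcal{T}$ and with $C=\int_{\mathcal{T}}f(t)\zeta_0^T(dt)$ non-degenerate, so that $\hat\theta_{G_0}=\int_{\mathcal{T}}y(t)G_0(dt)$ with $G_0=C^{-1}\zeta_0$ is a BLUE in this model. Define the integrated quantities $\tilde y(t)=\int_a^ty(u)du$, $\tilde f(t)=\int_a^tf(u)du$, $\tilde\epsilon(t)=\int_a^t\epsilon(u)du$, and consider the model $\tilde y(t)=\theta^T\tilde f(t)+\tilde\epsilon(t)$, whose error covariance is $R(t,s)=\int_a^t\int_a^sK(u,v)\,du\,dv$, observed together with $\tilde y^{(1)}=y$ on $\mathcal{T}$. Let $\eta_0,\eta_1$ be signed (scalar) measures on $\mathcal{T}$ with $$\int_{\mathcal{T}}R(t,s)\eta_0(dt)+\int_{\mathcal{T}}R^{(1)}(t,s)\eta_1(dt)=1\quad\text{for all }s\in\mathcal{T}.$$ Put $c=\int_a^A\big[\int_A^BK(t,s)\zeta_0(dt)-f(s)\big]ds\in\mathbb{R}^m$, $\tilde\zeta_0=-c\,\eta_0$, $\tilde\zeta_1=-c\,\eta_1+\zeta_0$, and $\tilde C=\int_{\mathcal{T}}\tilde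 f(t)\tilde\zeta_0^T(dt)+\int_{\mathcal{T}}\tilde f^{(1)}(t)\tilde\zeta_1^T(dt)$, assumed non-degenerate. Then the estimator $\int_{\mathcal{T}}\tilde y(t)\tilde G_0(dt)+\int_{\mathcal{T}}\tilde y^{(1)}(t)\tilde G_1(dt)$ with $\tilde G_i=\tilde C^{-1}\tilde\zeta_i$ $(i=0,1)$ is a BLUE in the model $\tilde y(t)=\theta^T\tilde f(t)+\tilde\epsilon(t)$ with covariance kernel $R$.
   Context: $R^{(1)}(t,s)=\partial R(t,s)/\partial t$. A BLUE in the integrated model is an unbiased estimator of the form $\int_{\mathcal{T}}\tilde y(t)H_0(dt)+\int_{\mathcal{T}}\tilde y^{(1)}(t)H_1(dt)$ ($H_0,H_1$ signed $\mathbb{R}^m$-valued measures) with minimal covariance matrix in Loewner order among such unbiased estimators; a BLUE in the original model is defined analogously using $y$ only. *)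

theory Defs
  imports "HOL-Analysis.Analysis"
begin

text \<open>Finite signed measures on an observation interval T are represented as finite
linear combinations of finite (nonnegative) Borel measures on T.  Every finite signed
measure (and every finite R^m-valued signed measure) is of this form (Jordan
decomposition); integrals only depend on the represented signed measure.\<close>

type_synonym smeas = "(real \<times> real measure) list"
type_synonym 'm vmeas = "((real, 'm) vec \<times> real measure) list"

definition admissible_meas :: "real set \<Rightarrow> real measure \<Rightarrow> bool" where
  "admissible_meas T M \<longleftrightarrow> finite_measure M \<and> space M = T \<and> sets M = sets (restrict_space borel T)"

definition smeas_on :: "real set \<Rightarrow> smeas \<Rightarrow> bool" where
  "smeas_on T S \<longleftrightarrow> (\<forall>p\<in>set S. admissible_meas T (snd p))"

definition vmeas_on :: "real set \<Rightarrow> ('m::finite) vmeas \<Rightarrow> bool" where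
  "vmeas_on T H \<longleftrightarrow> (\<forall>p\<in>set H. admissible_meas T (snd p))"

definition sint :: "smeas \<Rightarrow> (real \<Rightarrow> real) \<Rightarrow> real" where
  "sint S g = sum_list (map (\<lambda>(c, M). c * integral\<^sup>L M g) S)"

definition vint :: "('m::finite) vmeas \<Rightarrow> (real \<Rightarrow> real) \<Rightarrow> real^'m" where
  "vint H g = sum_list (map (\<lambda>(v, M). integral\<^sup>L M g *\<^sub>R v) H)"

text \<open>The matrix int F(t) G^T(dt), entry (i,j) = int F_i dG_j.\<close>
definition fmat :: "(real \<Rightarrow> real^'m) \<Rightarrow> ('m::finite) vmeas \<Rightarrow> real^'m^'m" where
  "fmat F G = (\<chi> i j. vint G (\<lambda>t. F t $ i) $ j)"

definition vscale :: "real^'m \<Rightarrow> smeas \<Rightarrow> ('m::finite) vmeas" where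
  "vscale c S = map (\<lambda>(r, M). (r *\<^sub>R c, M)) S"

definition mmul :: "real^'m^'m \<Rightarrow> ('m::finite) vmeas \<Rightarrow> 'm vmeas" where
  "mmul A G = map (\<lambda>(v, M). (A *v v, M)) G"

definition dint :: "(real \<Rightarrow> real \<Rightarrow> real) \<Rightarrow> ('m::finite) vmeas \<Rightarrow> 'm vmeas \<Rightarrow> real^'m^'m" where
  "dint k H H' = sum_list (map (\<lambda>(v, M). sum_list (map (\<lambda>(w, N).
      integral\<^sup>L M (\<lambda>t. integral\<^sup>L N (\<lambda>s. k t s)) *\<^sub>R (\<chi> i j. v $ i * w $ j)) H')) H)"

definition psd :: "real^'m^'m \<Rightarrow> bool" where
  "psd D \<longleftrightarrow> (\<forall>x::real^'m. 0 \<le> x \<bullet> (D *v x))"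

definition cov_kernel :: "real set \<Rightarrow> (real \<Rightarrow> real \<Rightarrow> real) \<Rightarrow> bool" where
  "cov_kernel S K \<longleftrightarrow> (\<forall>t\<in>S. \<forall>s\<in>S. K t s = K s t) \<and>
     (\<forall>n (x::nat \<Rightarrow> real) (c::nat \<Rightarrow> real). (\<forall>i<n. x i \<in> S) \<longrightarrow>
        0 \<le> (\<Sum>i<n. \<Sum>j<n. c i * c j * K (x i) (x j)))"

text \<open>Model observing a process z and its derivative z' on T, with regression functions
F0 (for z) and F1 (for z'), Cov(z(t),z(s)) = k00 t s, Cov(z'(t),z(s)) = k10 t s,
Cov(z'(t),z'(s)) = k11 t s.  Estimator: int z dH0 + int z' dH1.\<close>

definition unbiased2 :: "(real \<Rightarrow> real^'m) \<Rightarrow> (real \<Rightarrow> real^'m) \<Rightarrow> ('m::finite) vmeas \<Rightarrow> 'm vmeas \<Rightarrow> bool" where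
  "unbiased2 F0 F1 H0 H1 \<longleftrightarrow>
     (\<forall>\<theta>::real^'m. vint H0 (\<lambda>t. \<theta> \<bullet> F0 t) + vint H1 (\<lambda>t. \<theta> \<bullet> F1 t) = \<theta>)"

definition cov2 :: "(real \<Rightarrow> real \<Rightarrow> real) \<Rightarrow> (real \<Rightarrow> real \<Rightarrow> real) \<Rightarrow> (real \<Rightarrow> real \<Rightarrow> real)
     \<Rightarrow> ('m::finite) vmeas \<Rightarrow> 'm vmeas \<Rightarrow> real^'m^'m" where
  "cov2 k00 k10 k11 H0 H1 =
     dint k00 H0 H0 + dint (\<lambda>t s. k10 s t) H0 H1 + dint k10 H1 H0 + dint k11 H1 H1"

definition blue2 :: "real set \<Rightarrow> (real \<Rightarrow> real^'m) \<Rightarrow> (real \<Rightarrow> real^'m)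
     \<Rightarrow> (real \<Rightarrow> real \<Rightarrow> real) \<Rightarrow> (real \<Rightarrow> real \<Rightarrow> real) \<Rightarrow> (real \<Rightarrow> real \<Rightarrow> real)
     \<Rightarrow> ('m::finite) vmeas \<Rightarrow> 'm vmeas \<Rightarrow> bool" where
  "blue2 T F0 F1 k00 k10 k11 H0 H1 \<longleftrightarrow>
     vmeas_on T H0 \<and> vmeas_on T H1 \<and> unbiased2 F0 F1 H0 H1 \<and>
     (\<forall>H0' H1'. vmeas_on T H0' \<and> vmeas_on T H1' \<and> unbiased2 F0 F1 H0' H1' \<longrightarrow>
        psd (cov2 k00 k10 k11 H0' H1' - cov2 k00 k10 k11 H0 H1))"

end

theory Submission
  imports Defs
begin


definition sc :: "real^'m \<Rightarrow> ('m::finite) vmeas \<Rightarrow> smeas" where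
  "sc x L = map (\<lambda>(v,M). (x \<bullet> v, M)) L"
definition negs :: "smeas \<Rightarrow> smeas" where
  "negs S = map (\<lambda>(r,M). (-r,M)) S"
definition Dk :: "(real\<Rightarrow>real\<Rightarrow>real) \<Rightarrow> smeas \<Rightarrow> smeas \<Rightarrow> real" where
  "Dk k S T = sum_list (map (\<lambda>(r,M). sum_list (map (\<lambda>(q,N). r*q*(\<integral>t. (\<integral>s. k t s \<partial>N) \<partial>M)) T)) S)"

lemma dot_sum_list_mv: "(x::real^'m::finite) \<bullet> (sum_list (map f xs) *v y) = sum_list (map (\<lambda>z. x \<bullet> (f z *v y)) xs)"
  by (induction xs) (simp_all add: matrix_vector_mult_add_rdistrib inner_add_right)

lemma dot_outer: "(x::real^'m::finite) \<bullet> ((c *\<^sub>R (\<chi> i j. v$i * w$j)) *v y) = c * (x\<bullet>v) * (y\<bullet>w)"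
  by (simp add: matrix_vector_mult_def inner_vec_def sum_distrib_left sum_distrib_right mult_ac sum_product)

lemma dot_dint: "(x::real^'m::finite) \<bullet> (dint k L P *v y) = Dk k (sc x L) (sc y P)"
  unfolding dint_def Dk_def sc_def
  by (simp add: dot_sum_list_mv dot_outer case_prod_beta o_def mult_ac)

lemma dot_vint: "(x::real^'m::finite) \<bullet> vint L g = sint (sc x L) g"
  unfolding vint_def sint_def sc_def
  by (induction L) (auto simp: inner_add_right mult_ac)



lemma sum_list_neg: "sum_list (map (\<lambda>x. - f x) xs) = - sum_list (map f xs :: real list)"
  by (induction xs) auto

lemma Dk_append1: "Dk k (S @ S') T = Dk k S T + Dk k S' T"
  by (simp add: Dk_def)
lemma Dk_append2: "Dk k S (T @ T') = Dk k S T + Dk k S T'"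
  unfolding Dk_def by (induction S) (auto simp: algebra_simps)
lemma Dk_neg1: "Dk k (negs S) T = - Dk k S T"
proof -
  have "\<And>r X. sum_list (map (\<lambda>(q,N). (-r)*q*X N) T) = - sum_list (map (\<lambda>(q,N). r*q*X N) T)"
    by (induction T) auto
  then show ?thesis unfolding Dk_def negs_def by (induction S) auto
qed
lemma Dk_neg2: "Dk k S (negs T) = - Dk k S T"
proof -
  have "\<And>r X. sum_list (map (\<lambda>(q,N). r*q*X N) (negs T)) = - sum_list (map (\<lambda>(q,N). r*q*X N) T)"
    unfolding negs_def by (induction T) auto
  then show ?thesis unfolding Dk_def by (induction S) auto
qed

lemma sint_append: "sint (S @ T) g = sint S g + sint T g"
  by (simp add: sint_def)
lemma vint_append: "vint (S @ T) g = vint S g + vint T g"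
  by (simp add: vint_def)

lemma dot_transpose: "(x::real^'m::finite) \<bullet> (A *v v) = (transpose A *v x) \<bullet> v"
  by (metis dot_lmul_matrix inner_commute transpose_matrix_vector transpose_transpose vector_transpose_matrix)

lemma sc_mmul: "sc x (mmul A L) = sc (transpose A *v x) (L::('m::finite) vmeas)"
  by (simp add: sc_def mmul_def case_prod_beta o_def dot_transpose)

lemma vint_vscale: "vint (vscale c S) g = sint S g *\<^sub>R c"
  unfolding vint_def vscale_def sint_def
  by (induction S) (auto simp: scaleR_add_left)

lemma vint_mmul: "vint (mmul A L) g = A *v vint L g"
  unfolding vint_def mmul_def
  by (induction L) (auto simp: matrix_vector_right_distrib matrix_vector_mult_scaleR)

lemma sc_append: "sc x (L @ P) = sc x L @ sc x P"
  by (simp add: sc_def)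

lemma smeas_on_sc: "vmeas_on T L \<Longrightarrow> smeas_on T (sc x L)"
  by (auto simp: vmeas_on_def smeas_on_def sc_def)
lemma smeas_on_negs: "smeas_on T S \<Longrightarrow> smeas_on T (negs S)"
  by (auto simp: smeas_on_def negs_def)
lemma smeas_on_append: "smeas_on T S \<Longrightarrow> smeas_on T S' \<Longrightarrow> smeas_on T (S @ S')"
  by (auto simp: smeas_on_def)
lemma vmeas_on_mmul: "vmeas_on T L \<Longrightarrow> vmeas_on T (mmul A L)"
  by (auto simp: vmeas_on_def mmul_def)
lemma vmeas_on_vscale: "smeas_on T S \<Longrightarrow> vmeas_on T (vscale c S)"
  by (auto simp: vmeas_on_def smeas_on_def vscale_def)
lemma vmeas_on_append: "vmeas_on T S \<Longrightarrow> vmeas_on T S' \<Longrightarrow> vmeas_on T (S @ S')"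
  by (auto simp: vmeas_on_def)



lemma adm_facts:
  assumes "admissible_meas T M"
  shows "finite_measure M" "space M = T" "sets M = sets (restrict_space borel T)"
  using assms by (auto simp: admissible_meas_def)

lemma adm_measurable:
  assumes "admissible_meas T M" "continuous_on T g"
  shows "g \<in> borel_measurable M"
proof -
  have "g \<in> borel_measurable (restrict_space borel T)"
    by (rule borel_measurable_continuous_on_restrict[OF assms(2)])
  then show ?thesis using measurable_cong_sets[OF adm_facts(3)[OF assms(1)] refl] by blast
qed

lemma adm_integrable:
  assumes "admissible_meas T M" "compact T" "continuous_on T g"
  shows "integrable M (g :: _ \<Rightarrow> real)"
proof -
  interpret finite_measure M using adm_facts[OF assms(1)] by simp
  have "compact (g ` T)" by (rule compact_continuous_image[OF assms(3,2)])
  then obtain C where C: "\<And>x. x \<in> T \<Longrightarrow> norm (g x) \<le> C"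
    using compact_imp_bounded bounded_iff by (metis image_eqI)
  show ?thesis
    by (rule integrable_const_bound[where B=C])
       (use C adm_facts[OF assms(1)] adm_measurable[OF assms(1,3)] in auto)
qed

lemma adm_bound:
  assumes "admissible_meas T M" "\<And>t. t \<in> T \<Longrightarrow> \<bar>g t\<bar> \<le> C"
  shows "\<bar>integral\<^sup>L M (g :: _ \<Rightarrow> real)\<bar> \<le> C * measure M T"
proof -
  interpret finite_measure M using adm_facts[OF assms(1)] by simp
  have sp: "space M = T" using adm_facts[OF assms(1)] by simp
  have nn: "0 \<le> C * measure M T"
  proof (cases "T = {}")
    case True then show ?thesis by simp
  next
    case False then obtain t where "t \<in> T" by auto
    then have "0 \<le> C" using assms(2)[of t] by linarith
    then show ?thesis by simp
  qed
  show ?thesis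
  proof (cases "integrable M g")
    case True
    have "\<bar>integral\<^sup>L M g\<bar> \<le> integral\<^sup>L M (\<lambda>x. \<bar>g x\<bar>)" by (rule integral_abs_bound)
    also have "\<dots> \<le> integral\<^sup>L M (\<lambda>x. C)"
      using True assms(2) sp by (intro integral_mono) auto
    also have "\<dots> = C * measure M T" using sp by simp
    finally show ?thesis .
  next
    case False then show ?thesis using nn by (simp add: not_integrable_integral_eq)
  qed
qed

lemma adm_param_cont:
  assumes "admissible_meas T N" "compact T"
    and cont: "continuous_on (U \<times> T) (\<lambda>(x, t). k x t)"
  shows "continuous_on U (\<lambda>x. integral\<^sup>L N (k x) :: real)"
  unfolding continuous_on_def
proof (intro strip tendstoI)
  fix e' :: real and x
  assume "e' > 0" "x \<in> U"
  define e where "e = e' / (measure N T + 1)"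
  have mpos: "0 \<le> measure N T" by simp
  have "e > 0" unfolding e_def by (intro divide_pos_pos) (use \<open>e' > 0\<close> mpos in linarith)+
  from continuous_on_prod_compactE[OF cont assms(2) \<open>x \<in> U\<close> \<open>0 < e\<close>]
  obtain X0 where X0: "x \<in> X0" "open X0"
    and bnd0: "\<forall>y\<in>X0 \<inter> U. \<forall>t \<in> T. dist ((\<lambda>(x,t). k x t) (y,t)) ((\<lambda>(x,t). k x t) (x,t)) \<le> e"
    by blast
  have bnd: "\<forall>y\<in>X0 \<inter> U. \<forall>t \<in> T. dist (k y t) (k x t) \<le> e"
    using bnd0 by simp
  have ck: "continuous_on T (k y)" if "y \<in> U" for y
  proof -
    have "continuous_on T (\<lambda>t. (\<lambda>(x,t). k x t) ((\<lambda>t. (y,t)) t))"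
      by (rule continuous_on_compose2[OF cont]) (use that in \<open>auto intro!: continuous_intros\<close>)
    then show ?thesis by simp
  qed
  have "\<forall>\<^sub>F y in at x within U. y \<in> X0 \<inter> U"
    using X0(1) X0(2) eventually_at_topological by auto
  then show "\<forall>\<^sub>F y in at x within U. dist (integral\<^sup>L N (k y)) (integral\<^sup>L N (k x)) < e'"
  proof eventually_elim
    case (elim y)
    have "dist (integral\<^sup>L N (k y)) (integral\<^sup>L N (k x)) = \<bar>integral\<^sup>L N (\<lambda>t. k y t - k x t)\<bar>"
      using elim \<open>x \<in> U\<close> by (simp add: dist_real_def integral_diff adm_integrable[OF assms(1,2)] ck)
    also have "\<dots> \<le> e * measure N T"
      by (rule adm_bound[OF assms(1)]) (use bnd elim in \<open>auto simp: dist_real_def\<close>)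
    also have "\<dots> < e'"
    proof -
      have p: "0 < measure N T + 1" using mpos by linarith
      have "measure N T / (measure N T + 1) < 1" by (subst divide_less_eq_1_pos[OF p]) simp
      then have "e' * (measure N T / (measure N T + 1)) < e' * 1"
        using \<open>e' > 0\<close> by (rule mult_strict_left_mono)
      then show ?thesis by (simp add: e_def)
    qed
    finally show ?case .
  qed
qed



lemma cont_swap:
  assumes "continuous_on (U \<times> V) (\<lambda>(x, y). f x y)"
  shows "continuous_on (V \<times> U) (\<lambda>(y, x). f x y)"
proof -
  have "continuous_on (V \<times> U) (\<lambda>z. (\<lambda>(x, y). f x y) ((\<lambda>z. (snd z, fst z)) z))"
    by (rule continuous_on_compose2[OF assms]) (auto intro!: continuous_intros)
  then show ?thesis by (simp add: case_prod_beta)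
qed

lemma cont_slice:
  assumes "continuous_on (U \<times> V) (\<lambda>(x, y). f x y)" "x \<in> U"
  shows "continuous_on V (f x)"
proof -
  have "continuous_on V (\<lambda>y. (\<lambda>(x, y). f x y) ((\<lambda>y. (x, y)) y))"
    by (rule continuous_on_compose2[OF assms(1)]) (use assms(2) in \<open>auto intro!: continuous_intros\<close>)
  then show ?thesis by simp
qed

lemma id_meas_borel:
  assumes "admissible_meas T M"
  shows "(\<lambda>x. x) \<in> measurable M borel"
proof -
  have "(\<lambda>x. x) \<in> measurable (restrict_space borel T) borel"
    by (rule measurable_restrict_space1[OF measurable_ident_sets[OF refl]])
  then show ?thesis using measurable_cong_sets[OF adm_facts(3)[OF assms] refl] by blast
qed

lemma adm_fubini:
  fixes k :: "real \<Rightarrow> real \<Rightarrow> real"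
  assumes M: "admissible_meas {p1..q1} M" and N: "admissible_meas {p2..q2} N"
    and le: "p1 \<le> q1" "p2 \<le> q2"
    and cont: "continuous_on ({p1..q1} \<times> {p2..q2}) (\<lambda>(t, s). k t s)"
  shows "(\<integral>t. (\<integral>s. k t s \<partial>N) \<partial>M) = (\<integral>s. (\<integral>t. k t s \<partial>M) \<partial>N)"
proof -
  interpret M: finite_measure M using adm_facts[OF M] by simp
  interpret N: finite_measure N using adm_facts[OF N] by simp
  interpret P: pair_sigma_finite M N
    by (intro pair_sigma_finite.intro M.sigma_finite_measure_axioms N.sigma_finite_measure_axioms)
  define cl1 where "cl1 x = max p1 (min q1 x)" for x :: real
  define cl2 where "cl2 x = max p2 (min q2 x)" for x :: real
  define k' where "k' z = k (cl1 (fst z)) (cl2 (snd z))" for z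
  have "continuous_on UNIV (\<lambda>z. (\<lambda>(t, s). k t s) ((\<lambda>z. (cl1 (fst z), cl2 (snd z))) z))"
    by (rule continuous_on_compose2[OF cont])
       (use le in \<open>auto simp: cl1_def cl2_def intro!: continuous_intros\<close>)
  then have ck': "continuous_on UNIV k'" by (simp add: k'_def)
  have m1: "(\<lambda>z. z) \<in> measurable (M \<Otimes>\<^sub>M N) (borel \<Otimes>\<^sub>M borel)"
  proof -
    have "(\<lambda>z. (fst z, snd z)) \<in> measurable (M \<Otimes>\<^sub>M N) (borel \<Otimes>\<^sub>M borel)"
      by (intro measurable_Pair measurable_comp[OF measurable_fst id_meas_borel[OF M], unfolded comp_def]
          measurable_comp[OF measurable_snd id_meas_borel[OF N], unfolded comp_def])
    then show ?thesis by simp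
  qed
  then have m2: "(\<lambda>z. z) \<in> measurable (M \<Otimes>\<^sub>M N) borel" by (simp add: borel_prod)
  have "k' \<in> borel_measurable (M \<Otimes>\<^sub>M N)"
    using measurable_comp[OF m2 borel_measurable_continuous_onI[OF ck']] by (simp add: comp_def)
  moreover have "\<And>z. z \<in> space (M \<Otimes>\<^sub>M N) \<Longrightarrow> k' z = (\<lambda>(t, s). k t s) z"
    using adm_facts(2)[OF M] adm_facts(2)[OF N]
    by (auto simp: space_pair_measure k'_def cl1_def cl2_def)
  ultimately have meas: "(\<lambda>(t, s). k t s) \<in> borel_measurable (M \<Otimes>\<^sub>M N)"
    using measurable_cong by blast
  have "compact ((\<lambda>(t, s). k t s) ` ({p1..q1} \<times> {p2..q2}))"
    by (rule compact_continuous_image[OF cont]) (intro compact_Times compact_Icc)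
  then obtain C where C: "\<And>z. z \<in> {p1..q1} \<times> {p2..q2} \<Longrightarrow> norm ((\<lambda>(t, s). k t s) z) \<le> C"
    using compact_imp_bounded bounded_iff by (metis image_eqI)
  interpret PM: finite_measure "M \<Otimes>\<^sub>M N"
    by (rule finite_measure_pair_measure) (use adm_facts[OF M] adm_facts[OF N] in auto)
  have ae: "AE z in M \<Otimes>\<^sub>M N. norm ((\<lambda>(t, s). k t s) z) \<le> C"
    by (rule AE_I2) (use C adm_facts(2)[OF M] adm_facts(2)[OF N] in \<open>auto simp: space_pair_measure\<close>)
  have "integrable (M \<Otimes>\<^sub>M N) (\<lambda>(t, s). k t s)"
    by (rule PM.integrable_const_bound[OF ae meas])
  from P.Fubini_integral[OF this] show ?thesis by simp
qed

lemma lborel_int: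
  assumes "continuous_on {p..q} g"
  shows "integral\<^sup>L (restrict_space lborel {p..q}) g = integral {p..q} (g :: real \<Rightarrow> real)"
proof -
  have "integral\<^sup>L (restrict_space lborel {p..q}) g = (\<integral>x. indicator {p..q} x *\<^sub>R g x \<partial>lborel)"
    by (rule integral_restrict_space) simp
  also have "\<dots> = set_lebesgue_integral lborel {p..q} g"
    by (simp add: set_lebesgue_integral_def)
  also have "\<dots> = integral {p..q} g"
    by (rule set_borel_integral_eq_integral(2))
       (use borel_integrable_compact[OF compact_Icc assms] in \<open>simp add: set_integrable_def\<close>)
  finally show ?thesis .
qed

lemma adm_lborel: "admissible_meas {p..q} (restrict_space lborel {p..q})"
  unfolding admissible_meas_def
proof (intro conjI)
  show "space (restrict_space lborel {p..q}) = {p..q}" by simp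
  show "sets (restrict_space lborel {p..q}) = sets (restrict_space borel {p..q})"
    by (rule sets_restrict_space_cong) simp
  show "finite_measure (restrict_space lborel {p..q})"
    by (rule finite_measureI) (cases "p \<le> q"; simp add: emeasure_restrict_space)
qed

lemma adm_interval_fubini:
  fixes k :: "real \<Rightarrow> real \<Rightarrow> real"
  assumes M: "admissible_meas {p1..q1} M" and le: "p1 \<le> q1" "p \<le> q"
    and cont: "continuous_on ({p1..q1} \<times> {p..q}) (\<lambda>(t, v). k t v)"
  shows "(\<integral>t. integral {p..q} (k t) \<partial>M) = integral {p..q} (\<lambda>v. \<integral>t. k t v \<partial>M)"
proof -
  let ?N = "restrict_space lborel {p..q}"
  have "(\<integral>t. integral {p..q} (k t) \<partial>M) = (\<integral>t. (\<integral>v. k t v \<partial>?N) \<partial>M)"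
    by (rule Bochner_Integration.integral_cong[OF refl])
       (use adm_facts(2)[OF M] in \<open>auto simp: lborel_int[OF cont_slice[OF cont]]\<close>)
  also have "\<dots> = (\<integral>v. (\<integral>t. k t v \<partial>M) \<partial>?N)"
    by (rule adm_fubini[OF M adm_lborel le cont])
  also have "\<dots> = integral {p..q} (\<lambda>v. \<integral>t. k t v \<partial>M)"
    by (rule lborel_int) (rule adm_param_cont[OF M compact_Icc cont_swap[OF cont]])
  finally show ?thesis .
qed



lemma affine_sub:
  assumes "(s::real) > a"
  shows "integral {a..s} g = (s - a) * integral {0..1} (\<lambda>r. g ((s - a) * r + a))"
proof (cases "g integrable_on {a..s}")
  case True
  then have "(g has_integral integral {a..s} g) (cbox a s)" using integrable_integral[OF True] by simp
  from has_integral_affinity'[OF this, of "s - a" a] assms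
  have "((\<lambda>r. g ((s - a) * r + a)) has_integral (integral {a..s} g / (s - a))) {0..1}"
    by (simp add: divide_inverse mult.commute)
  then show ?thesis using assms by (simp add: integral_unique)
next
  case False
  have "\<not> (\<lambda>r. g ((s - a) * r + a)) integrable_on {0..1}"
  proof
    assume "(\<lambda>r. g ((s - a) * r + a)) integrable_on {0..1}"
    then obtain I where "((\<lambda>r. g ((s - a) * r + a)) has_integral I) (cbox 0 1)"
      by (auto simp: integrable_on_def)
    define m where "m = 1 / (s - a)"
    define c where "c = - a / (s - a)"
    have m: "m > 0" using assms by (simp add: m_def)
    have h: "((\<lambda>x. g ((s - a) * (m * x + c) + a)) has_integral (I / m)) (cbox ((0 - c) / m) ((1 - c) / m))"
      using has_integral_affinity'[OF \<open>(_ has_integral I) (cbox 0 1)\<close> m, of c] by (simp add: divide_inverse mult.commute)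
    have e1: "(0 - c) / m = a" and e2: "(1 - c) / m = s" using assms by (simp_all add: m_def c_def field_simps)
    have e3: "(s - a) * (m * x + c) + a = x" for x
    proof -
      have "m * x + c = (x - a) / (s - a)" by (simp add: m_def c_def diff_divide_distrib)
      then show ?thesis using assms by simp
    qed
    from h have "(g has_integral (I / m)) {a..s}" by (simp only: e1 e2 e3 cbox_interval)
    with False show False by (auto simp: integrable_on_def)
  qed
  with False show ?thesis by (simp add: not_integrable_integral)
qed

lemma vb_cont:
  fixes g :: "'a::topological_space \<Rightarrow> real \<Rightarrow> real"
  assumes cont: "continuous_on (U \<times> {a..b}) (\<lambda>(x, v). g x v)"
  shows "continuous_on (U \<times> {a..b}) (\<lambda>(x, s). integral {a..s} (g x))"
proof -
  have mem: "(s - a) * r + a \<in> {a..b}" if "s \<in> {a..b}" "r \<in> {0..1}" for s r :: real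
  proof -
    have "0 \<le> (s - a) * r" using that by auto
    moreover have "(s - a) * r \<le> (s - a) * 1" using that by (intro mult_left_mono) auto
    ultimately show ?thesis using that by auto
  qed
  have c1: "continuous_on ((U \<times> {a..b}) \<times> cbox 0 1)
      (\<lambda>z. (\<lambda>(x, v). g x v) ((\<lambda>z. (fst (fst z), (snd (fst z) - a) * snd z + a)) z))"
  proof -
    have img: "(\<lambda>z. (fst (fst z), (snd (fst z) - a) * snd z + a)) ` ((U \<times> {a..b}) \<times> cbox 0 1) \<subseteq> U \<times> {a..b}"
      using mem by force
    show ?thesis by (rule continuous_on_compose2[OF cont _ img]) (intro continuous_intros)
  qed
  have c2: "continuous_on ((U \<times> {a..b}) \<times> cbox 0 1) (\<lambda>(xs, r). g (fst xs) ((snd xs - a) * r + a))"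
    using c1 by (simp add: case_prod_beta)
  have "continuous_on (U \<times> {a..b}) (\<lambda>xs. integral (cbox 0 1) (\<lambda>r. g (fst xs) ((snd xs - a) * r + a)))"
    using integral_continuous_on_param[OF c2] by (simp add: case_prod_beta)
  then have "continuous_on (U \<times> {a..b}) (\<lambda>xs. (snd xs - a) * integral {0..1} (\<lambda>r. g (fst xs) ((snd xs - a) * r + a)))"
    by (auto intro!: continuous_intros)
  then show ?thesis
  proof (rule continuous_on_eq)
    fix xs assume "xs \<in> U \<times> {a..b}"
    show "(snd xs - a) * integral {0..1} (\<lambda>r. g (fst xs) ((snd xs - a) * r + a)) =
        (\<lambda>(x, s). integral {a..s} (g x)) xs"
    proof (cases "snd xs = a")
      case True then show ?thesis by (simp add: case_prod_beta)
    next
      case False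
      with \<open>xs \<in> U \<times> {a..b}\<close> have "snd xs > a" by auto
      then show ?thesis using affine_sub[OF \<open>snd xs > a\<close>, of "g (fst xs)"] by (simp add: case_prod_beta)
    qed
  qed
qed

lemma hk_bound:
  fixes g :: "real \<Rightarrow> real"
  assumes "p \<le> q" "\<And>v. v \<in> {p..q} \<Longrightarrow> \<bar>g v\<bar> \<le> C"
  shows "\<bar>integral {p..q} g\<bar> \<le> C * (q - p)"
proof (cases "g integrable_on {p..q}")
  case True
  have "\<bar>g p\<bar> \<le> C" by (rule assms(2)) (use assms(1) in auto)
  then have C: "0 \<le> C" by linarith
  have "norm (integral (cbox p q) g) \<le> C * (q - p)"
    using integrable_bound[OF C, of g p q] True assms by auto
  then show ?thesis by simp
next
  case False
  have "\<bar>g p\<bar> \<le> C" by (rule assms(2)) (use assms(1) in auto)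
  then have C: "0 \<le> C" by linarith
  then show ?thesis using False assms(1) by (simp add: not_integrable_integral)
qed

definition rk :: "real \<Rightarrow> (real \<Rightarrow> real \<Rightarrow> real) \<Rightarrow> real \<Rightarrow> real \<Rightarrow> real" where
  "rk a h t s = integral {a..t} (\<lambda>u. integral {a..s} (\<lambda>v. h u v))"
definition r1k :: "real \<Rightarrow> (real \<Rightarrow> real \<Rightarrow> real) \<Rightarrow> real \<Rightarrow> real \<Rightarrow> real" where
  "r1k a h t s = integral {a..s} (\<lambda>v. h t v)"

lemma r1k_cont:
  assumes "continuous_on ({a..b} \<times> {a..b}) (\<lambda>(u, v). h u v)"
  shows "continuous_on ({a..b} \<times> {a..b}) (\<lambda>(t, s). r1k a h t s)"
  using vb_cont[OF assms] by (simp add: r1k_def)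

lemma rk_cont:
  assumes "continuous_on ({a..b} \<times> {a..b}) (\<lambda>(u, v). h u v)"
  shows "continuous_on ({a..b} \<times> {a..b}) (\<lambda>(t, s). rk a h t s)"
proof -
  have "continuous_on ({a..b} \<times> {a..b}) (\<lambda>(s, u). r1k a h u s)"
    by (rule cont_swap[OF r1k_cont[OF assms]])
  from vb_cont[OF this] have "continuous_on ({a..b} \<times> {a..b}) (\<lambda>(s, t). integral {a..t} (\<lambda>u. r1k a h u s))"
    by simp
  from cont_swap[OF this] show ?thesis by (simp add: rk_def r1k_def)
qed

lemma r1k_add:
  assumes "\<And>u v. u \<in> {a..b} \<Longrightarrow> v \<in> {a..b} \<Longrightarrow> h u v = h1 u v + h2 u v"
    and c1: "continuous_on ({a..b} \<times> {a..b}) (\<lambda>(u, v). h1 u v)"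
    and c2: "continuous_on ({a..b} \<times> {a..b}) (\<lambda>(u, v). h2 u v)"
    and "t \<in> {a..b}" "s \<in> {a..b}"
  shows "r1k a h t s = r1k a h1 t s + r1k a h2 t s"
proof -
  have i1: "h1 t integrable_on {a..s}"
    by (rule integrable_continuous_interval, rule continuous_on_subset[OF cont_slice[OF c1]]) (use assms in auto)
  have i2: "h2 t integrable_on {a..s}"
    by (rule integrable_continuous_interval, rule continuous_on_subset[OF cont_slice[OF c2]]) (use assms in auto)
  have "r1k a h t s = integral {a..s} (\<lambda>v. h1 t v + h2 t v)"
    unfolding r1k_def by (rule integral_cong) (use assms in auto)
  also have "\<dots> = r1k a h1 t s + r1k a h2 t s"
    unfolding r1k_def by (rule integral_add[OF i1 i2])
  finally show ?thesis .
qed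

lemma rk_add:
  assumes h: "\<And>u v. u \<in> {a..b} \<Longrightarrow> v \<in> {a..b} \<Longrightarrow> h u v = h1 u v + h2 u v"
    and c1: "continuous_on ({a..b} \<times> {a..b}) (\<lambda>(u, v). h1 u v)"
    and c2: "continuous_on ({a..b} \<times> {a..b}) (\<lambda>(u, v). h2 u v)"
    and "t \<in> {a..b}" "s \<in> {a..b}"
  shows "rk a h t s = rk a h1 t s + rk a h2 t s"
proof -
  have rk_alt: "rk a g t s = integral {a..t} (\<lambda>u. r1k a g u s)" for g
    by (simp add: rk_def r1k_def)
  have i: "(\<lambda>u. r1k a g u s) integrable_on {a..t}"
    if "continuous_on ({a..b} \<times> {a..b}) (\<lambda>(u, v). g u v)" for g
  proof -
    have "continuous_on ({a..b} \<times> {a..b}) (\<lambda>(s, u). r1k a g u s)"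
      by (rule cont_swap[OF r1k_cont[OF that]])
    then have "continuous_on {a..b} (\<lambda>u. r1k a g u s)" using cont_slice assms by blast
    then show ?thesis by (rule integrable_continuous_interval[OF continuous_on_subset]) (use assms in auto)
  qed
  have "rk a h t s = integral {a..t} (\<lambda>u. r1k a h1 u s + r1k a h2 u s)"
    unfolding rk_alt by (rule integral_cong) (use assms in \<open>auto intro!: r1k_add[OF h c1 c2]\<close>)
  also have "\<dots> = rk a h1 t s + rk a h2 t s"
    unfolding rk_alt by (rule integral_add[OF i[OF c1] i[OF c2]])
  finally show ?thesis .
qed

lemma r1k_bound:
  assumes "\<And>u v. u \<in> {a..b} \<Longrightarrow> v \<in> {a..b} \<Longrightarrow> \<bar>h u v\<bar> \<le> e"
    and "t \<in> {a..b}" "s \<in> {a..b}"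
  shows "\<bar>r1k a h t s\<bar> \<le> e * (b - a)"
proof -
  have "\<bar>h t t\<bar> \<le> e" by (rule assms(1)) (use assms(2) in auto)
  then have e: "0 \<le> e" by linarith
  have "\<bar>r1k a h t s\<bar> \<le> e * (s - a)"
    unfolding r1k_def by (rule hk_bound) (use assms in auto)
  also have "\<dots> \<le> e * (b - a)" using e assms by (intro mult_left_mono) auto
  finally show ?thesis .
qed

lemma rk_bound:
  assumes "\<And>u v. u \<in> {a..b} \<Longrightarrow> v \<in> {a..b} \<Longrightarrow> \<bar>h u v\<bar> \<le> e"
    and "t \<in> {a..b}" "s \<in> {a..b}"
  shows "\<bar>rk a h t s\<bar> \<le> e * (b - a) * (b - a)"
proof -
  have "\<bar>h t t\<bar> \<le> e" by (rule assms(1)) (use assms(2) in auto)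
  then have e: "0 \<le> e" by linarith
  have "\<bar>rk a h t s\<bar> \<le> e * (b - a) * (t - a)"
    unfolding rk_def by (rule hk_bound) (use assms in \<open>auto intro!: r1k_bound[unfolded r1k_def]\<close>)
  also have "\<dots> \<le> e * (b - a) * (b - a)" using e assms by (intro mult_left_mono) auto
  finally show ?thesis .
qed



lemma sm_adm: "smeas_on T S \<Longrightarrow> (r, M) \<in> set S \<Longrightarrow> admissible_meas T M"
  by (force simp: smeas_on_def)

lemma int_sum_list:
  assumes "\<And>x. x \<in> set xs \<Longrightarrow> integrable M (f x)"
  shows "integrable M (\<lambda>t. sum_list (map (\<lambda>x. f x t) xs)) \<and>
    integral\<^sup>L M (\<lambda>t. sum_list (map (\<lambda>x. f x t) xs) :: real) = sum_list (map (\<lambda>x. integral\<^sup>L M (f x)) xs)"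
  using assms by (induction xs) auto

lemma hk_sum_list:
  assumes "\<And>x. x \<in> set xs \<Longrightarrow> f x integrable_on S"
  shows "(\<lambda>t. sum_list (map (\<lambda>x. f x t) xs)) integrable_on S \<and>
    integral S (\<lambda>t. sum_list (map (\<lambda>x. f x t) xs) :: real) = sum_list (map (\<lambda>x. integral S (f x)) xs)"
  using assms by (induction xs) (auto intro: integrable_add integrable_0 simp: integral_add)

lemma sum_list_swap:
  "sum_list (map (\<lambda>x. sum_list (map (\<lambda>y. f x y) ys)) xs) =
   (sum_list (map (\<lambda>y. sum_list (map (\<lambda>x. f x y) xs)) ys) :: real)"
  by (induction xs) (auto simp: sum_list_addf)

lemma sum_list_sum_swap:
  "sum_list (map (\<lambda>x. \<Sum>i\<in>I. f x i) xs) = (\<Sum>i\<in>I. sum_list (map (\<lambda>x. f x i) xs) :: real)"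
  by (induction xs) (auto simp: sum.distrib)

lemma sum_list_prod1: "(\<Sum>y\<leftarrow>ys. c * g y * e) = c * (\<Sum>y\<leftarrow>ys. g y) * (e::real)"
  by (induction ys) (simp_all add: algebra_simps)
lemma sum_list_prod: "(\<Sum>x\<leftarrow>xs. \<Sum>y\<leftarrow>ys. f x * g y * e) = (\<Sum>x\<leftarrow>xs. f x) * (\<Sum>y\<leftarrow>ys. g y) * (e::real)"
  by (induction xs) (simp_all add: sum_list_prod1 ring_distribs)

lemma sum_list_abs_le: "\<bar>sum_list (map f xs)\<bar> \<le> sum_list (map (\<lambda>x. \<bar>f x\<bar>) xs :: real list)"
  by (induction xs) auto

lemma sum_list_mono_real: "(\<And>x. x \<in> set xs \<Longrightarrow> f x \<le> g x) \<Longrightarrow> sum_list (map f xs) \<le> sum_list (map g xs :: real list)"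
  by (induction xs) (auto intro: add_mono)

context
  fixes A B :: real
  assumes AB: "A \<le> B"
begin

lemma sint_cont:
  assumes S: "smeas_on {A..B} S" and c: "continuous_on (U \<times> {A..B}) (\<lambda>(x, t). k x t)"
  shows "continuous_on U (\<lambda>x. sint S (k x))"
  using S unfolding sint_def
proof (induction S)
  case Nil then show ?case by (simp add: continuous_on_const)
next
  case (Cons p S)
  obtain r M where p: "p = (r, M)" by fastforce
  have M: "admissible_meas {A..B} M" using Cons.prems p by (auto simp: smeas_on_def)
  have "continuous_on U (\<lambda>x. integral\<^sup>L M (k x))" by (rule adm_param_cont[OF M compact_Icc c])
  moreover have "smeas_on {A..B} S" using Cons.prems by (auto simp: smeas_on_def)
  ultimately show ?case using Cons.IH p by (auto intro!: continuous_intros)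
qed

lemma sint_cong:
  assumes S: "smeas_on {A..B} S" and "\<And>t. t \<in> {A..B} \<Longrightarrow> f t = g t"
  shows "sint S f = sint S g"
proof -
  have "\<And>r M. (r, M) \<in> set S \<Longrightarrow> integral\<^sup>L M f = integral\<^sup>L M g"
    using assms adm_facts(2)[OF sm_adm[OF S]] by (intro Bochner_Integration.integral_cong) auto
  then show ?thesis unfolding sint_def by (intro arg_cong[where f=sum_list] map_cong) auto
qed

lemma sint_add:
  assumes S: "smeas_on {A..B} S" and "continuous_on {A..B} f" "continuous_on {A..B} g"
  shows "sint S (\<lambda>t. f t + g t) = sint S f + sint S g"
proof -
  have "\<And>r M. (r, M) \<in> set S \<Longrightarrow> integral\<^sup>L M (\<lambda>t. f t + g t) = integral\<^sup>L M f + integral\<^sup>L M g"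
    using assms by (intro Bochner_Integration.integral_add adm_integrable[OF sm_adm[OF S]] compact_Icc) auto
  then have "sint S (\<lambda>t. f t + g t) = sum_list (map (\<lambda>(r, M). r * integral\<^sup>L M f + r * integral\<^sup>L M g) S)"
    unfolding sint_def by (intro arg_cong[where f=sum_list] map_cong) (auto simp: algebra_simps)
  also have "\<dots> = sint S f + sint S g" by (induction S) (auto simp: sint_def algebra_simps)
  finally show ?thesis .
qed

lemma sint_mult: "sint S (\<lambda>t. c * f t) = c * sint S f"
  unfolding sint_def by (induction S) (auto simp: algebra_simps)

lemma sint_sum:
  assumes S: "smeas_on {A..B} S" and "finite I" and "\<And>i. i \<in> I \<Longrightarrow> continuous_on {A..B} (f i)"
  shows "sint S (\<lambda>t. \<Sum>i\<in>I. f i t) = (\<Sum>i\<in>I. sint S (f i))"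
proof -
  have "\<And>r M. (r, M) \<in> set S \<Longrightarrow> r * integral\<^sup>L M (\<lambda>t. \<Sum>i\<in>I. f i t) = (\<Sum>i\<in>I. r * integral\<^sup>L M (f i))"
  proof -
    fix r M assume rM: "(r, M) \<in> set S"
    have "integral\<^sup>L M (\<lambda>t. \<Sum>i\<in>I. f i t) = (\<Sum>i\<in>I. integral\<^sup>L M (f i))"
      by (rule Bochner_Integration.integral_sum) (use assms in \<open>auto intro!: adm_integrable[OF sm_adm[OF S rM]]\<close>)
    then show "r * integral\<^sup>L M (\<lambda>t. \<Sum>i\<in>I. f i t) = (\<Sum>i\<in>I. r * integral\<^sup>L M (f i))"
      by (simp add: sum_distrib_left)
  qed
  then have "sint S (\<lambda>t. \<Sum>i\<in>I. f i t) = sum_list (map (\<lambda>(r, M). \<Sum>i\<in>I. r * integral\<^sup>L M (f i)) S)"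
    unfolding sint_def by (intro arg_cong[where f=sum_list] map_cong) auto
  also have "\<dots> = (\<Sum>i\<in>I. sint S (f i))"
    unfolding sint_def split_beta' by (rule sum_list_sum_swap)
  finally show ?thesis .
qed

lemma sint_interval_fubini:
  fixes k :: "real \<Rightarrow> real \<Rightarrow> real"
  assumes S: "smeas_on {A..B} S" and pq: "p \<le> q"
    and c: "continuous_on ({A..B} \<times> {p..q}) (\<lambda>(t, v). k t v)"
  shows "sint S (\<lambda>t. integral {p..q} (k t)) = integral {p..q} (\<lambda>v. sint S (\<lambda>t. k t v))"
proof -
  have i: "(\<lambda>v. r * integral\<^sup>L M (\<lambda>t. k t v)) integrable_on {p..q}" if "(r, M) \<in> set S" for r M
  proof -
    have "continuous_on {p..q} (\<lambda>v. integral\<^sup>L M (\<lambda>t. k t v))"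
      by (rule adm_param_cont[OF sm_adm[OF S that] compact_Icc cont_swap[OF c]])
    then show ?thesis by (intro integrable_continuous_interval continuous_on_mult[OF continuous_on_const])
  qed
  have "sint S (\<lambda>t. integral {p..q} (k t)) = sum_list (map (\<lambda>(r, M). integral {p..q} (\<lambda>v. r * integral\<^sup>L M (\<lambda>t. k t v))) S)"
    unfolding sint_def
    by (intro arg_cong[where f=sum_list] map_cong)
       (auto simp: adm_interval_fubini[OF sm_adm[OF S] AB pq c])
  also have "\<dots> = integral {p..q} (\<lambda>v. sint S (\<lambda>t. k t v))"
    unfolding sint_def using hk_sum_list[of S "\<lambda>(r, M) v. r * integral\<^sup>L M (\<lambda>t. k t v)" "{p..q}"] i
    by (simp add: split_beta')
  finally show ?thesis .
qed

definition W :: "smeas \<Rightarrow> real" where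
  "W S = sum_list (map (\<lambda>(r, M). \<bar>r\<bar> * measure M {A..B}) S)"

lemma Dk_inner:
  assumes S: "smeas_on {A..B} S" and T: "smeas_on {A..B} T"
    and c: "continuous_on ({A..B} \<times> {A..B}) (\<lambda>(t, s). k t s)"
  shows "Dk k S T = sint S (\<lambda>t. sint T (k t))"
proof -
  have "\<And>r M. (r, M) \<in> set S \<Longrightarrow>
     sum_list (map (\<lambda>(q, N). r * q * (\<integral>t. (\<integral>s. k t s \<partial>N) \<partial>M)) T) = r * integral\<^sup>L M (\<lambda>t. sint T (k t))"
  proof -
    fix r M assume rM: "(r, M) \<in> set S"
    have ii: "integrable M (\<lambda>t. q * (\<integral>s. k t s \<partial>N))" if "(q, N) \<in> set T" for q N
      by (intro integrable_mult_right adm_integrable[OF sm_adm[OF S rM] compact_Icc]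
          adm_param_cont[OF sm_adm[OF T that] compact_Icc c])
    have "integral\<^sup>L M (\<lambda>t. sint T (k t)) = integral\<^sup>L M (\<lambda>t. sum_list (map (\<lambda>x. (\<lambda>(q, N) t. q * (\<integral>s. k t s \<partial>N)) x t) T))"
      unfolding sint_def by (simp add: split_beta')
    also have "\<dots> = sum_list (map (\<lambda>x. integral\<^sup>L M ((\<lambda>(q, N) t. q * (\<integral>s. k t s \<partial>N)) x)) T)"
      using int_sum_list[of T M "\<lambda>(q, N) t. q * (\<integral>s. k t s \<partial>N)"] ii by (auto simp: case_prod_beta)
    finally show "sum_list (map (\<lambda>(q, N). r * q * (\<integral>t. (\<integral>s. k t s \<partial>N) \<partial>M)) T) = r * integral\<^sup>L M (\<lambda>t. sint T (k t))"
      by (simp add: split_beta' sum_list_const_mult o_def mult.assoc)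
  qed
  then show ?thesis unfolding Dk_def sint_def[of S]
    by (intro arg_cong[where f=sum_list] map_cong) auto
qed

lemma Dk_swap:
  assumes S: "smeas_on {A..B} S" and T: "smeas_on {A..B} T"
    and c: "continuous_on ({A..B} \<times> {A..B}) (\<lambda>(t, s). k t s)"
  shows "Dk k S T = Dk (\<lambda>t s. k s t) T S"
proof -
  have fub: "\<And>r M q N. (r, M) \<in> set S \<Longrightarrow> (q, N) \<in> set T \<Longrightarrow>
     (\<integral>t. (\<integral>s. k t s \<partial>N) \<partial>M) = (\<integral>s. (\<integral>t. k t s \<partial>M) \<partial>N)"
    by (rule adm_fubini[OF sm_adm[OF S] sm_adm[OF T] AB AB c])
  have "Dk k S T = sum_list (map (\<lambda>(r, M). sum_list (map (\<lambda>(q, N). q * r * (\<integral>s. (\<integral>t. k t s \<partial>M) \<partial>N)) T)) S)"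
    unfolding Dk_def
    by (rule arg_cong[where f=sum_list], rule map_cong[OF refl], clarsimp,
        rule arg_cong[where f=sum_list], rule map_cong[OF refl], clarsimp simp: fub)
  also have "\<dots> = Dk (\<lambda>t s. k s t) T S"
    unfolding Dk_def split_beta' by (subst sum_list_swap) (simp add: mult_ac)
  finally show ?thesis .
qed

lemma Dk_cong:
  assumes S: "smeas_on {A..B} S" and T: "smeas_on {A..B} T"
    and "\<And>t s. t \<in> {A..B} \<Longrightarrow> s \<in> {A..B} \<Longrightarrow> k t s = k' t s"
  shows "Dk k S T = Dk k' S T"
proof -
  have "\<And>r M q N. (r, M) \<in> set S \<Longrightarrow> (q, N) \<in> set T \<Longrightarrow>
      (\<integral>t. (\<integral>s. k t s \<partial>N) \<partial>M) = (\<integral>t. (\<integral>s. k' t s \<partial>N) \<partial>M)"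
    using assms adm_facts(2)[OF sm_adm[OF S]] adm_facts(2)[OF sm_adm[OF T]]
    by (intro Bochner_Integration.integral_cong refl) auto
  then show ?thesis unfolding Dk_def
    by (rule_tac arg_cong[where f=sum_list], rule_tac map_cong[OF refl], clarsimp,
        rule_tac arg_cong[where f=sum_list], rule_tac map_cong[OF refl], clarsimp)
qed

lemma Dk_add:
  assumes S: "smeas_on {A..B} S" and T: "smeas_on {A..B} T"
    and h: "\<And>t s. t \<in> {A..B} \<Longrightarrow> s \<in> {A..B} \<Longrightarrow> k t s = k1 t s + k2 t s"
    and c1: "continuous_on ({A..B} \<times> {A..B}) (\<lambda>(t, s). k1 t s)"
    and c2: "continuous_on ({A..B} \<times> {A..B}) (\<lambda>(t, s). k2 t s)"
  shows "Dk k S T = Dk k1 S T + Dk k2 S T"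
proof -
  have e: "sint S (\<lambda>t. sint T (k t)) = sint S (\<lambda>t. sint T (k1 t) + sint T (k2 t))"
  proof (rule sint_cong[OF S])
    fix t assume t: "t \<in> {A..B}"
    have "sint T (k t) = sint T (\<lambda>s. k1 t s + k2 t s)" by (rule sint_cong[OF T]) (use h t in auto)
    also have "\<dots> = sint T (k1 t) + sint T (k2 t)"
      by (rule sint_add[OF T]) (use cont_slice[OF c1 t] cont_slice[OF c2 t] in auto)
    finally show "sint T (k t) = sint T (k1 t) + sint T (k2 t)" .
  qed
  have c: "continuous_on ({A..B} \<times> {A..B}) (\<lambda>(t, s). k t s)"
    by (rule continuous_on_eq[OF continuous_on_add[OF c1 c2]]) (use h in auto)
  show ?thesis
    unfolding Dk_inner[OF S T c] Dk_inner[OF S T c1] Dk_inner[OF S T c2] e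
    by (rule sint_add[OF S]) (intro sint_cont[OF T] c1 c2)+
qed

lemma Dk_bound:
  assumes S: "smeas_on {A..B} S" and T: "smeas_on {A..B} T"
    and h: "\<And>t s. t \<in> {A..B} \<Longrightarrow> s \<in> {A..B} \<Longrightarrow> \<bar>k t s\<bar> \<le> e"
  shows "\<bar>Dk k S T\<bar> \<le> W S * W T * e"
proof -
  have e: "0 \<le> e" using h[of A A] AB by force
  have b: "\<bar>r * q * (\<integral>t. (\<integral>s. k t s \<partial>N) \<partial>M)\<bar> \<le> (\<bar>r\<bar> * measure M {A..B}) * (\<bar>q\<bar> * measure N {A..B}) * e"
    if "(r, M) \<in> set S" "(q, N) \<in> set T" for r M q N
  proof -
    have "\<bar>\<integral>t. (\<integral>s. k t s \<partial>N) \<partial>M\<bar> \<le> (e * measure N {A..B}) * measure M {A..B}"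
      by (intro adm_bound[OF sm_adm[OF S that(1)]] adm_bound[OF sm_adm[OF T that(2)]] h)
    then have "\<bar>r * q\<bar> * \<bar>\<integral>t. (\<integral>s. k t s \<partial>N) \<partial>M\<bar> \<le> \<bar>r * q\<bar> * ((e * measure N {A..B}) * measure M {A..B})"
      by (intro mult_left_mono) auto
    then show ?thesis by (simp add: abs_mult algebra_simps)
  qed
  have "\<bar>Dk k S T\<bar> \<le> sum_list (map (\<lambda>(r, M). sum_list (map (\<lambda>(q, N). (\<bar>r\<bar> * measure M {A..B}) * (\<bar>q\<bar> * measure N {A..B}) * e) T)) S)"
    unfolding Dk_def
    apply (rule order_trans[OF sum_list_abs_le])
    apply (rule sum_list_mono_real)
    apply (clarsimp)
    apply (rule order_trans[OF sum_list_abs_le])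
    apply (rule sum_list_mono_real)
    using b by auto
  also have "\<dots> = W S * W T * e"
    unfolding W_def split_beta' by (rule sum_list_prod)
  finally show ?thesis .
qed

lemma Dk_sep:
  assumes S: "smeas_on {A..B} S" and T: "smeas_on {A..B} T" and I: "finite I"
    and p: "\<And>i. i \<in> I \<Longrightarrow> continuous_on {A..B} (p i)"
    and q: "\<And>i. i \<in> I \<Longrightarrow> continuous_on {A..B} (q i)"
  shows "Dk (\<lambda>t s. \<Sum>i\<in>I. p i t * q i s) S T = (\<Sum>i\<in>I. sint S (p i) * sint T (q i))"
proof -
  have c: "continuous_on ({A..B} \<times> {A..B}) (\<lambda>(t, s). \<Sum>i\<in>I. p i t * q i s)"
    using p q by (auto simp: case_prod_beta intro!: continuous_intros continuous_on_compose2[OF p]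
        continuous_on_compose2[OF q])
  have "Dk (\<lambda>t s. \<Sum>i\<in>I. p i t * q i s) S T = sint S (\<lambda>t. sint T (\<lambda>s. \<Sum>i\<in>I. p i t * q i s))"
    by (rule Dk_inner[OF S T c])
  also have "\<dots> = sint S (\<lambda>t. \<Sum>i\<in>I. sint T (q i) * p i t)"
    by (rule sint_cong[OF S], subst sint_sum[OF T I])
       (use p q in \<open>auto intro!: continuous_intros simp: sint_mult[symmetric] mult.commute\<close>)
  also have "\<dots> = (\<Sum>i\<in>I. sint S (\<lambda>t. sint T (q i) * p i t))"
    by (rule sint_sum[OF S I]) (use p in \<open>auto intro!: continuous_intros\<close>)
  also have "\<dots> = (\<Sum>i\<in>I. sint S (p i) * sint T (q i))"
    by (simp only: sint_mult) (simp add: mult.commute)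
  finally show ?thesis .
qed

end



lemma hat_approx:
  fixes K :: "real \<Rightarrow> real \<Rightarrow> real"
  assumes ab: "a < b" and cK: "continuous_on ({a..b} \<times> {a..b}) (\<lambda>(u, v). K u v)" and e: "\<epsilon> > 0"
  obtains n :: nat and x :: "nat \<Rightarrow> real" and \<phi> :: "nat \<Rightarrow> real \<Rightarrow> real" where
    "\<And>i. x i \<in> {a..b}" "\<And>i. continuous_on UNIV (\<phi> i)"
    "\<And>u v. u \<in> {a..b} \<Longrightarrow> v \<in> {a..b} \<Longrightarrow>
       \<bar>K u v - (\<Sum>i\<le>n. \<Sum>j\<le>n. K (x i) (x j) * \<phi> i u * \<phi> j v)\<bar> \<le> \<epsilon>"
proof -
  have "uniformly_continuous_on ({a..b} \<times> {a..b}) (\<lambda>(u, v). K u v)"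
    by (rule compact_uniformly_continuous[OF cK]) (intro compact_Times compact_Icc)
  then obtain \<delta> where d: "\<delta> > 0" and dK: "\<And>z z'. z \<in> {a..b} \<times> {a..b} \<Longrightarrow> z' \<in> {a..b} \<times> {a..b} \<Longrightarrow>
      dist z' z < \<delta> \<Longrightarrow> dist ((\<lambda>(u, v). K u v) z') ((\<lambda>(u, v). K u v) z) < \<epsilon>"
    unfolding uniformly_continuous_on_def using e by metis
  obtain n :: nat where n: "2 * (b - a) / \<delta> < real n" using reals_Archimedean2 by blast
  have npos: "real n > 0" using n ab d by (smt (verit) divide_pos_pos)
  define h where "h = (b - a) / real n"
  have hpos: "h > 0" using ab npos by (simp add: h_def)
  have hn: "h * real n = b - a" using npos by (simp add: h_def)
  have hd: "2 * h < \<delta>" using n d npos by (simp add: h_def field_simps)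
  define \<sigma> where "\<sigma> i u = max 0 (min 1 ((u - a) / h - real i + 1))" for i :: nat and u :: real
  define \<phi> where "\<phi> i u = \<sigma> i u - \<sigma> (Suc i) u" for i u
  define x where "x i = a + real (min i n) * h" for i
  have xab: "x i \<in> {a..b}" for i
  proof -
    have "real (min i n) * h \<le> real n * h" using hpos by (intro mult_right_mono) auto
    then show ?thesis using hpos hn by (auto simp: x_def algebra_simps)
  qed
  have cphi: "continuous_on UNIV (\<phi> i)" for i
    unfolding \<phi>_def \<sigma>_def using hpos by (auto intro!: continuous_intros)
  have s0: "\<sigma> 0 u = 1" if "u \<in> {a..b}" for u
    using that hpos by (simp add: \<sigma>_def)
  have sN: "\<sigma> (Suc n) u = 0" if "u \<in> {a..b}" for u
  proof -
    have "(u - a) / h \<le> real n" using that hpos hn by (simp add: divide_le_eq algebra_simps)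
    then show ?thesis by (simp add: \<sigma>_def)
  qed
  have sum1: "(\<Sum>i\<le>n. \<phi> i u) = 1" if "u \<in> {a..b}" for u
    unfolding \<phi>_def using sum_telescope[of "\<lambda>i. \<sigma> i u" n] s0[OF that] sN[OF that] by simp
  have nonneg: "\<phi> i u \<ge> 0" for i u
    by (simp add: \<phi>_def \<sigma>_def)
  have supp: "\<bar>u - x i\<bar> < h" if "\<phi> i u \<noteq> 0" "i \<le> n" for i u
  proof -
    have "\<not> (u - a) / h \<le> real i - 1" using that(1) by (auto simp: \<phi>_def \<sigma>_def)
    moreover have "\<not> (u - a) / h \<ge> real i + 1" using that(1) by (auto simp: \<phi>_def \<sigma>_def)
    ultimately have "real i - 1 < (u - a) / h" "(u - a) / h < real i + 1" by auto
    then have "(real i - 1) * h < u - a" "u - a < (real i + 1) * h"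
      using hpos by (auto simp: field_simps)
    then show ?thesis using that(2) by (auto simp: x_def algebra_simps)
  qed
  show ?thesis
  proof (rule that[of x \<phi> n])
    show "x i \<in> {a..b}" for i by (rule xab)
    show "continuous_on UNIV (\<phi> i)" for i by (rule cphi)
    fix u v assume u: "u \<in> {a..b}" and v: "v \<in> {a..b}"
    have "K u v = K u v * (\<Sum>i\<le>n. \<phi> i u) * (\<Sum>j\<le>n. \<phi> j v)" using sum1[OF u] sum1[OF v] by simp
    also have "\<dots> = (\<Sum>i\<le>n. \<Sum>j\<le>n. K u v * \<phi> i u * \<phi> j v)"
      by (simp add: sum_distrib_left sum_distrib_right mult_ac)
    finally have K1: "K u v = (\<Sum>i\<le>n. \<Sum>j\<le>n. K u v * \<phi> i u * \<phi> j v)" .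
    have eq2: "(\<Sum>i\<le>n. \<Sum>j\<le>n. (K u v - K (x i) (x j)) * (\<phi> i u * \<phi> j v)) =
       (\<Sum>i\<le>n. \<Sum>j\<le>n. K u v * \<phi> i u * \<phi> j v) - (\<Sum>i\<le>n. \<Sum>j\<le>n. K (x i) (x j) * \<phi> i u * \<phi> j v)"
      by (simp add: sum_subtractf[symmetric] left_diff_distrib mult.assoc)
    have "K u v - (\<Sum>i\<le>n. \<Sum>j\<le>n. K (x i) (x j) * \<phi> i u * \<phi> j v) =
        (\<Sum>i\<le>n. \<Sum>j\<le>n. (K u v - K (x i) (x j)) * (\<phi> i u * \<phi> j v))"
      unfolding eq2 using K1 by linarith
    also have "\<bar>\<dots>\<bar> \<le> (\<Sum>i\<le>n. \<Sum>j\<le>n. \<epsilon> * (\<phi> i u * \<phi> j v))"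
    proof (rule order_trans[OF sum_abs], rule sum_mono, rule order_trans[OF sum_abs], rule sum_mono)
      fix i j assume i: "i \<in> {..n}" and j: "j \<in> {..n}"
      show "\<bar>(K u v - K (x i) (x j)) * (\<phi> i u * \<phi> j v)\<bar> \<le> \<epsilon> * (\<phi> i u * \<phi> j v)"
      proof (cases "\<phi> i u * \<phi> j v = 0")
        case True then show ?thesis by (metis abs_0 mult_zero_right order_refl)
      next
        case False
        then have "\<phi> i u \<noteq> 0" "\<phi> j v \<noteq> 0" by auto
        then have hu: "\<bar>u - x i\<bar> < h" and hv: "\<bar>v - x j\<bar> < h" using supp i j by auto
        have "dist (u, v) (x i, x j) \<le> norm (u - x i) + norm (v - x j)"
          using norm_Pair_le[of "u - x i" "v - x j"] by (simp add: dist_norm)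
        also have "\<dots> < \<delta>" using hu hv hd by simp
        finally have "dist (K u v) (K (x i) (x j)) < \<epsilon>"
          using dK[of "(x i, x j)" "(u, v)"] u v xab by auto
        then have "\<bar>K u v - K (x i) (x j)\<bar> \<le> \<epsilon>" by (simp add: dist_real_def)
        then show ?thesis using nonneg[of i u] nonneg[of j v]
          by (simp add: abs_mult mult_right_mono)
      qed
    qed
    also have "\<dots> = \<epsilon> * (\<Sum>i\<le>n. \<phi> i u) * (\<Sum>j\<le>n. \<phi> j v)"
      by (simp add: sum_distrib_left sum_distrib_right mult_ac)
    also have "\<dots> = \<epsilon>" using sum1[OF u] sum1[OF v] by simp
    finally show "\<bar>K u v - (\<Sum>i\<le>n. \<Sum>j\<le>n. K (x i) (x j) * \<phi> i u * \<phi> j v)\<bar> \<le> \<epsilon>" .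
  qed
qed



definition Bq :: "real \<Rightarrow> (real \<Rightarrow> real \<Rightarrow> real) \<Rightarrow> smeas \<Rightarrow> smeas \<Rightarrow> smeas \<Rightarrow> smeas \<Rightarrow> real" where
  "Bq a K S0 S1 T0 T1 = Dk (rk a K) S0 T0 + Dk (\<lambda>t s. r1k a K s t) S0 T1 + Dk (r1k a K) S1 T0 + Dk K S1 T1"

lemma Dk_sep2:
  assumes AB: "A \<le> B" and S: "smeas_on {A..B} S" and T: "smeas_on {A..B} T" and N: "finite N"
    and p: "\<And>i j. i \<in> N \<Longrightarrow> j \<in> N \<Longrightarrow> continuous_on {A..B} (p i j)"
    and q: "\<And>i j. i \<in> N \<Longrightarrow> j \<in> N \<Longrightarrow> continuous_on {A..B} (q i j)"
  shows "Dk (\<lambda>t s. \<Sum>i\<in>N. \<Sum>j\<in>N. p i j t * q i j s) S T = (\<Sum>i\<in>N. \<Sum>j\<in>N. sint S (p i j) * sint T (q i j))"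
proof -
  have e1: "(\<lambda>t s. \<Sum>i\<in>N. \<Sum>j\<in>N. p i j t * q i j s) = (\<lambda>t s. \<Sum>z\<in>N \<times> N. p (fst z) (snd z) t * q (fst z) (snd z) s)"
    by (simp add: sum.cartesian_product split_beta')
  have "Dk (\<lambda>t s. \<Sum>z\<in>N \<times> N. p (fst z) (snd z) t * q (fst z) (snd z) s) S T =
      (\<Sum>z\<in>N \<times> N. sint S (p (fst z) (snd z)) * sint T (q (fst z) (snd z)))"
    by (rule Dk_sep[OF AB S T]) (use N p q in auto)
  then show ?thesis unfolding e1 by (simp add: sum.cartesian_product split_beta')
qed

context
  fixes a A B :: real
  assumes aA: "a \<le> A" and AB: "A < B"
begin

lemma ABle: "A \<le> B" using AB by simp

lemma sq_sub: "{A..B} \<times> {A..B} \<subseteq> {a..B} \<times> {a..B}" using aA by auto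

lemma kern_conts:
  assumes "continuous_on ({a..B} \<times> {a..B}) (\<lambda>(u, v). h u v)"
  shows "continuous_on ({A..B} \<times> {A..B}) (\<lambda>(t, s). rk a h t s)"
    "continuous_on ({A..B} \<times> {A..B}) (\<lambda>(t, s). r1k a h t s)"
    "continuous_on ({A..B} \<times> {A..B}) (\<lambda>(t, s). r1k a h s t)"
    "continuous_on ({A..B} \<times> {A..B}) (\<lambda>(t, s). h t s)"
proof -
  show "continuous_on ({A..B} \<times> {A..B}) (\<lambda>(t, s). rk a h t s)"
    by (rule continuous_on_subset[OF rk_cont[OF assms] sq_sub])
  show c1: "continuous_on ({A..B} \<times> {A..B}) (\<lambda>(t, s). r1k a h t s)"
    by (rule continuous_on_subset[OF r1k_cont[OF assms] sq_sub])
  show "continuous_on ({A..B} \<times> {A..B}) (\<lambda>(t, s). r1k a h s t)"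
    using cont_swap[OF c1] by simp
  show "continuous_on ({A..B} \<times> {A..B}) (\<lambda>(t, s). h t s)"
    by (rule continuous_on_subset[OF assms sq_sub])
qed

lemma Bq_add:
  assumes S0: "smeas_on {A..B} S0" and S1: "smeas_on {A..B} S1"
    and h: "\<And>u v. u \<in> {a..B} \<Longrightarrow> v \<in> {a..B} \<Longrightarrow> h u v = h1 u v + h2 u v"
    and c1: "continuous_on ({a..B} \<times> {a..B}) (\<lambda>(u, v). h1 u v)"
    and c2: "continuous_on ({a..B} \<times> {a..B}) (\<lambda>(u, v). h2 u v)"
  shows "Bq a h S0 S1 S0 S1 = Bq a h1 S0 S1 S0 S1 + Bq a h2 S0 S1 S0 S1"
proof -
  have inab: "t \<in> {A..B} \<Longrightarrow> t \<in> {a..B}" for t using aA by auto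
  note cc1 = kern_conts[OF c1] and cc2 = kern_conts[OF c2]
  have "Dk (rk a h) S0 S0 = Dk (rk a h1) S0 S0 + Dk (rk a h2) S0 S0"
    by (rule Dk_add[OF ABle S0 S0 _ cc1(1) cc2(1)]) (use inab in \<open>auto intro!: rk_add[OF h c1 c2]\<close>)
  moreover have "Dk (\<lambda>t s. r1k a h s t) S0 S1 = Dk (\<lambda>t s. r1k a h1 s t) S0 S1 + Dk (\<lambda>t s. r1k a h2 s t) S0 S1"
    by (rule Dk_add[OF ABle S0 S1 _ cc1(3) cc2(3)]) (use inab in \<open>auto intro!: r1k_add[OF h c1 c2]\<close>)
  moreover have "Dk (r1k a h) S1 S0 = Dk (r1k a h1) S1 S0 + Dk (r1k a h2) S1 S0"
    by (rule Dk_add[OF ABle S1 S0 _ cc1(2) cc2(2)]) (use inab in \<open>auto intro!: r1k_add[OF h c1 c2]\<close>)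
  moreover have "Dk h S1 S1 = Dk h1 S1 S1 + Dk h2 S1 S1"
    by (rule Dk_add[OF ABle S1 S1 _ cc1(4) cc2(4)]) (use inab h in auto)
  ultimately show ?thesis by (simp add: Bq_def)
qed

lemma Bq_bound:
  assumes S0: "smeas_on {A..B} S0" and S1: "smeas_on {A..B} S1"
    and h: "\<And>u v. u \<in> {a..B} \<Longrightarrow> v \<in> {a..B} \<Longrightarrow> \<bar>h u v\<bar> \<le> e"
  shows "\<bar>Bq a h S0 S1 S0 S1\<bar> \<le> (W A B S0 * W A B S0 * ((B - a) * (B - a)) + 2 * (W A B S0 * W A B S1 * (B - a))
       + W A B S1 * W A B S1) * e"
proof -
  have inab: "t \<in> {A..B} \<Longrightarrow> t \<in> {a..B}" for t using aA by auto
  have b1: "\<bar>Dk (rk a h) S0 S0\<bar> \<le> W A B S0 * W A B S0 * (e * (B - a) * (B - a))"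
    by (rule Dk_bound[OF ABle S0 S0]) (use inab in \<open>auto intro!: rk_bound[OF h]\<close>)
  have b2: "\<bar>Dk (\<lambda>t s. r1k a h s t) S0 S1\<bar> \<le> W A B S0 * W A B S1 * (e * (B - a))"
    by (rule Dk_bound[OF ABle S0 S1]) (use inab in \<open>auto intro!: r1k_bound[OF h]\<close>)
  have b3: "\<bar>Dk (r1k a h) S1 S0\<bar> \<le> W A B S1 * W A B S0 * (e * (B - a))"
    by (rule Dk_bound[OF ABle S1 S0]) (use inab in \<open>auto intro!: r1k_bound[OF h]\<close>)
  have b4: "\<bar>Dk h S1 S1\<bar> \<le> W A B S1 * W A B S1 * e"
    by (rule Dk_bound[OF ABle S1 S1]) (use inab h in auto)
  have "\<bar>Bq a h S0 S1 S0 S1\<bar> \<le> \<bar>Dk (rk a h) S0 S0\<bar> + \<bar>Dk (\<lambda>t s. r1k a h s t) S0 S1\<bar> + \<bar>Dk (r1k a h) S1 S0\<bar> + \<bar>Dk h S1 S1\<bar>"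
    unfolding Bq_def by linarith
  also have "\<dots> \<le> W A B S0 * W A B S0 * (e * (B - a) * (B - a)) + W A B S0 * W A B S1 * (e * (B - a))
      + W A B S1 * W A B S0 * (e * (B - a)) + W A B S1 * W A B S1 * e"
    using b1 b2 b3 b4 by linarith
  also have "\<dots> = (W A B S0 * W A B S0 * ((B - a) * (B - a)) + 2 * (W A B S0 * W A B S1 * (B - a))
       + W A B S1 * W A B S1) * e"
    by (simp add: algebra_simps)
  finally show ?thesis .
qed

end



lemma hk_dsum:
  fixes C :: "'i \<Rightarrow> 'i \<Rightarrow> real" and g :: "'i \<Rightarrow> 'i \<Rightarrow> real \<Rightarrow> real"
  assumes N: "finite N" and g: "\<And>i j. continuous_on UNIV (g i j)"
  shows "integral {p..q} (\<lambda>v. \<Sum>i\<in>N. \<Sum>j\<in>N. C i j * g i j v) = (\<Sum>i\<in>N. \<Sum>j\<in>N. C i j * integral {p..q} (g i j))"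
proof -
  have cg: "continuous_on {p..q} (g i j)" for i j by (rule continuous_on_subset[OF g]) auto
  have cij: "continuous_on {p..q} (\<lambda>v. C i j * g i j v)" for i j
    by (intro continuous_on_mult continuous_on_const cg)
  have ci: "continuous_on {p..q} (\<lambda>v. \<Sum>j\<in>N. C i j * g i j v)" for i
    by (intro continuous_on_sum) (rule cij)
  have "integral {p..q} (\<lambda>v. \<Sum>i\<in>N. \<Sum>j\<in>N. C i j * g i j v) = (\<Sum>i\<in>N. integral {p..q} (\<lambda>v. \<Sum>j\<in>N. C i j * g i j v))"
    by (rule integral_sum[OF N]) (rule integrable_continuous_interval[OF ci])
  also have "\<dots> = (\<Sum>i\<in>N. \<Sum>j\<in>N. integral {p..q} (\<lambda>v. C i j * g i j v))"
    by (rule sum.cong[OF refl], rule integral_sum[OF N]) (rule integrable_continuous_interval[OF cij])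
  finally show ?thesis by simp
qed

lemma neg_eps: "(\<And>e. e > 0 \<Longrightarrow> - C * e \<le> (x::real)) \<Longrightarrow> 0 \<le> x"
proof (rule ccontr)
  assume h: "\<And>e. e > 0 \<Longrightarrow> - C * e \<le> x" and "\<not> 0 \<le> x"
  then have x: "x < 0" by simp
  define e where "e = - x / (2 * (\<bar>C\<bar> + 1))"
  have e: "e > 0" unfolding e_def by (rule divide_pos_pos) (use x in auto)
  have "- \<bar>C\<bar> * e \<le> - C * e" using e by (simp add: mult_right_mono)
  moreover have "- \<bar>C\<bar> * e > x"
  proof -
    have "- \<bar>C\<bar> * e = x * (\<bar>C\<bar> / (2 * (\<bar>C\<bar> + 1)))" by (simp add: e_def)
    moreover have q: "\<bar>C\<bar> / (2 * (\<bar>C\<bar> + 1)) < 1" by (simp add: divide_less_eq)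
    have "x * 1 < x * (\<bar>C\<bar> / (2 * (\<bar>C\<bar> + 1)))" by (rule mult_strict_left_mono_neg[OF q x])
    ultimately show ?thesis by simp
  qed
  ultimately show False using h[OF e] by simp
qed

context
  fixes a A B :: real
  assumes aA: "a \<le> A" and AB: "A < B"
begin

lemma Bq_sep_nonneg:
  fixes n :: nat and x :: "nat \<Rightarrow> real" and \<phi> :: "nat \<Rightarrow> real \<Rightarrow> real"
  assumes S0: "smeas_on {A..B} S0" and S1: "smeas_on {A..B} S1"
    and cov: "cov_kernel {a..B} K" and x: "\<And>i. x i \<in> {a..B}"
    and \<phi>: "\<And>i. continuous_on UNIV (\<phi> i)"
  shows "0 \<le> Bq a (\<lambda>u v. \<Sum>i\<le>n. \<Sum>j\<le>n. K (x i) (x j) * \<phi> i u * \<phi> j v) S0 S1 S0 S1"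
proof -
  let ?N = "{..n}"
  define Kn where "Kn u v = (\<Sum>i\<le>n. \<Sum>j\<le>n. K (x i) (x j) * \<phi> i u * \<phi> j v)" for u v
  define c where "c i j = K (x i) (x j)" for i j
  define \<Phi> where "\<Phi> i t = integral {a..t} (\<phi> i)" for i t
  have ABle: "A \<le> B" using AB by simp
  have cphi: "continuous_on {A..B} (\<phi> i)" for i by (rule continuous_on_subset[OF \<phi>]) auto
  have cPhi: "continuous_on {A..B} (\<Phi> i)" for i
  proof -
    have "continuous_on {a..B} (\<Phi> i)" unfolding \<Phi>_def
      by (rule indefinite_integral_continuous_1, rule integrable_continuous_interval,
          rule continuous_on_subset[OF \<phi>]) auto
    then show ?thesis by (rule continuous_on_subset) (use aA in auto)
  qed
  have csym: "c i j = c j i" for i j using cov x by (simp add: c_def cov_kernel_def)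
  have r1E: "r1k a Kn t s = (\<Sum>i\<in>?N. \<Sum>j\<in>?N. (c i j * \<phi> i t) * \<Phi> j s)" for t s
  proof -
    have "integral {a..s} (\<lambda>v. \<Sum>i\<in>?N. \<Sum>j\<in>?N. (c i j * \<phi> i t) * \<phi> j v) =
        (\<Sum>i\<in>?N. \<Sum>j\<in>?N. (c i j * \<phi> i t) * integral {a..s} (\<phi> j))"
      by (rule hk_dsum[where g="\<lambda>i j. \<phi> j"]) (simp_all add: \<phi>)
    then show ?thesis by (simp add: r1k_def Kn_def \<Phi>_def c_def mult.assoc)
  qed
  have rkE: "rk a Kn t s = (\<Sum>i\<in>?N. \<Sum>j\<in>?N. (c i j * \<Phi> i t) * \<Phi> j s)" for t s
  proof -
    have "rk a Kn t s = integral {a..t} (\<lambda>u. r1k a Kn u s)" by (simp add: rk_def r1k_def)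
    also have "\<dots> = integral {a..t} (\<lambda>u. \<Sum>i\<in>?N. \<Sum>j\<in>?N. (c i j * \<Phi> j s) * \<phi> i u)"
      unfolding r1E by (simp add: mult_ac)
    also have "\<dots> = (\<Sum>i\<in>?N. \<Sum>j\<in>?N. (c i j * \<Phi> j s) * \<Phi> i t)"
      unfolding \<Phi>_def[of _ t] by (rule hk_dsum[where g="\<lambda>i j. \<phi> i"]) (use \<phi> in auto)
    finally show ?thesis by (simp add: mult_ac)
  qed
  define aa where "aa i = sint S0 (\<Phi> i)" for i
  define bb where "bb i = sint S1 (\<phi> i)" for i
  have T1: "Dk (rk a Kn) S0 S0 = (\<Sum>i\<in>?N. \<Sum>j\<in>?N. c i j * aa i * aa j)"
  proof -
    have "Dk (rk a Kn) S0 S0 = Dk (\<lambda>t s. \<Sum>i\<in>?N. \<Sum>j\<in>?N. (\<lambda>t. c i j * \<Phi> i t) t * \<Phi> j s) S0 S0"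
      by (rule Dk_cong[OF ABle S0 S0]) (simp add: rkE)
    also have "\<dots> = (\<Sum>i\<in>?N. \<Sum>j\<in>?N. sint S0 (\<lambda>t. c i j * \<Phi> i t) * sint S0 (\<Phi> j))"
      by (rule Dk_sep2[OF ABle S0 S0]) (auto intro!: continuous_intros cPhi)
    finally show ?thesis by (simp add: sint_mult[OF ABle] aa_def)
  qed
  have T2: "Dk (\<lambda>t s. r1k a Kn s t) S0 S1 = (\<Sum>i\<in>?N. \<Sum>j\<in>?N. c i j * aa j * bb i)"
  proof -
    have "Dk (\<lambda>t s. r1k a Kn s t) S0 S1 = Dk (\<lambda>t s. \<Sum>i\<in>?N. \<Sum>j\<in>?N. (\<lambda>t. c i j * \<Phi> j t) t * \<phi> i s) S0 S1"
      by (rule Dk_cong[OF ABle S0 S1]) (simp add: r1E mult_ac)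
    also have "\<dots> = (\<Sum>i\<in>?N. \<Sum>j\<in>?N. sint S0 (\<lambda>t. c i j * \<Phi> j t) * sint S1 (\<phi> i))"
      by (rule Dk_sep2[OF ABle S0 S1]) (auto intro!: continuous_intros cPhi cphi)
    finally show ?thesis by (simp add: sint_mult[OF ABle] aa_def bb_def)
  qed
  have T3: "Dk (r1k a Kn) S1 S0 = (\<Sum>i\<in>?N. \<Sum>j\<in>?N. c i j * bb i * aa j)"
  proof -
    have "Dk (r1k a Kn) S1 S0 = Dk (\<lambda>t s. \<Sum>i\<in>?N. \<Sum>j\<in>?N. (\<lambda>t. c i j * \<phi> i t) t * \<Phi> j s) S1 S0"
      by (rule Dk_cong[OF ABle S1 S0]) (simp add: r1E)
    also have "\<dots> = (\<Sum>i\<in>?N. \<Sum>j\<in>?N. sint S1 (\<lambda>t. c i j * \<phi> i t) * sint S0 (\<Phi> j))"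
      by (rule Dk_sep2[OF ABle S1 S0]) (auto intro!: continuous_intros cPhi cphi)
    finally show ?thesis by (simp add: sint_mult[OF ABle] aa_def bb_def)
  qed
  have T4: "Dk Kn S1 S1 = (\<Sum>i\<in>?N. \<Sum>j\<in>?N. c i j * bb i * bb j)"
  proof -
    have "Dk Kn S1 S1 = Dk (\<lambda>t s. \<Sum>i\<in>?N. \<Sum>j\<in>?N. (\<lambda>t. c i j * \<phi> i t) t * \<phi> j s) S1 S1"
      by (rule Dk_cong[OF ABle S1 S1]) (simp add: Kn_def c_def mult_ac)
    also have "\<dots> = (\<Sum>i\<in>?N. \<Sum>j\<in>?N. sint S1 (\<lambda>t. c i j * \<phi> i t) * sint S1 (\<phi> j))"
      by (rule Dk_sep2[OF ABle S1 S1]) (auto intro!: continuous_intros cphi)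
    finally show ?thesis by (simp add: sint_mult[OF ABle] bb_def)
  qed
  define w where "w i = aa i + bb i" for i
  have "0 \<le> (\<Sum>i<Suc n. \<Sum>j<Suc n. w i * w j * K (x i) (x j))"
  proof -
    from cov have pd: "\<And>m (y::nat\<Rightarrow>real) (cc::nat\<Rightarrow>real). (\<forall>i<m. y i \<in> {a..B}) \<Longrightarrow>
        0 \<le> (\<Sum>i<m. \<Sum>j<m. cc i * cc j * K (y i) (y j))"
      unfolding cov_kernel_def by blast
    show ?thesis by (rule pd) (use x in auto)
  qed
  also have "\<dots> = (\<Sum>i\<in>?N. \<Sum>j\<in>?N. c i j * aa i * aa j) + (\<Sum>i\<in>?N. \<Sum>j\<in>?N. c i j * aa i * bb j)
      + (\<Sum>i\<in>?N. \<Sum>j\<in>?N. c i j * bb i * aa j) + (\<Sum>i\<in>?N. \<Sum>j\<in>?N. c i j * bb i * bb j)"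
    by (simp add: lessThan_Suc_atMost w_def c_def sum.distrib[symmetric] algebra_simps)
  also have "(\<Sum>i\<in>?N. \<Sum>j\<in>?N. c i j * aa i * bb j) = (\<Sum>i\<in>?N. \<Sum>j\<in>?N. c i j * aa j * bb i)"
    by (subst sum.swap) (simp add: csym)
  also have "(\<Sum>i\<in>?N. \<Sum>j\<in>?N. c i j * aa i * aa j) + (\<Sum>i\<in>?N. \<Sum>j\<in>?N. c i j * aa j * bb i)
      + (\<Sum>i\<in>?N. \<Sum>j\<in>?N. c i j * bb i * aa j) + (\<Sum>i\<in>?N. \<Sum>j\<in>?N. c i j * bb i * bb j) =
      Bq a Kn S0 S1 S0 S1"
    unfolding Bq_def T1 T2 T3 T4 ..
  finally show ?thesis by (simp only: Kn_def[abs_def])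
qed

lemma Bq_step:
  fixes n :: nat and x :: "nat \<Rightarrow> real" and \<phi> :: "nat \<Rightarrow> real \<Rightarrow> real"
  assumes S0: "smeas_on {A..B} S0" and S1: "smeas_on {A..B} S1"
    and cov: "cov_kernel {a..B} K" and cK: "continuous_on ({a..B} \<times> {a..B}) (\<lambda>(u, v). K u v)"
    and x: "\<And>i. x i \<in> {a..B}" and \<phi>: "\<And>i. continuous_on UNIV (\<phi> i)"
    and app: "\<And>u v. u \<in> {a..B} \<Longrightarrow> v \<in> {a..B} \<Longrightarrow>
       \<bar>K u v - (\<Sum>i\<le>n. \<Sum>j\<le>n. K (x i) (x j) * \<phi> i u * \<phi> j v)\<bar> \<le> e"
  shows "- (W A B S0 * W A B S0 * ((B - a) * (B - a)) + 2 * (W A B S0 * W A B S1 * (B - a))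
       + W A B S1 * W A B S1) * e \<le> Bq a K S0 S1 S0 S1"
proof -
  define Kn where "Kn u v = (\<Sum>i\<le>n. \<Sum>j\<le>n. K (x i) (x j) * \<phi> i u * \<phi> j v)" for u v
  define h where "h u v = K u v - Kn u v" for u v
  have cKn: "continuous_on ({a..B} \<times> {a..B}) (\<lambda>(u, v). Kn u v)"
  proof -
    have "continuous_on UNIV (\<lambda>z::real \<times> real. \<Sum>i\<le>n. \<Sum>j\<le>n. K (x i) (x j) * \<phi> i (fst z) * \<phi> j (snd z))"
      by (intro continuous_intros continuous_on_compose2[OF \<phi>]) auto
    then show ?thesis unfolding Kn_def split_beta' by (rule continuous_on_subset) auto
  qed
  have ch: "continuous_on ({a..B} \<times> {a..B}) (\<lambda>(u, v). h u v)"
    unfolding h_def using continuous_on_diff[OF cK cKn] by (simp add: split_beta')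
  have "Bq a K S0 S1 S0 S1 = Bq a Kn S0 S1 S0 S1 + Bq a h S0 S1 S0 S1"
    by (rule Bq_add[OF aA AB S0 S1 _ cKn ch]) (simp add: h_def)
  moreover have "0 \<le> Bq a Kn S0 S1 S0 S1"
    unfolding Kn_def by (rule Bq_sep_nonneg[OF S0 S1 cov x \<phi>])
  moreover have "\<bar>Bq a h S0 S1 S0 S1\<bar> \<le> (W A B S0 * W A B S0 * ((B - a) * (B - a)) + 2 * (W A B S0 * W A B S1 * (B - a))
       + W A B S1 * W A B S1) * e"
    by (rule Bq_bound[OF aA AB S0 S1]) (use app in \<open>simp add: h_def Kn_def\<close>)
  ultimately show ?thesis by linarith
qed

lemma Bq_psd:
  assumes S0: "smeas_on {A..B} S0" and S1: "smeas_on {A..B} S1"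
    and cov: "cov_kernel {a..B} K" and cK: "continuous_on ({a..B} \<times> {a..B}) (\<lambda>(u, v). K u v)"
  shows "0 \<le> Bq a K S0 S1 S0 S1"
proof (rule neg_eps)
  fix e :: real assume e: "e > 0"
  have aB: "a < B" using aA AB by simp
  show "- (W A B S0 * W A B S0 * ((B - a) * (B - a)) + 2 * (W A B S0 * W A B S1 * (B - a))
       + W A B S1 * W A B S1) * e \<le> Bq a K S0 S1 S0 S1"
    by (rule hat_approx[OF aB cK e]) (rule Bq_step[OF S0 S1 cov cK], assumption+)
qed

end



lemma vec_eq_dot: "(\<And>x. x \<bullet> u = x \<bullet> (w::real^'m::finite)) \<Longrightarrow> u = w"
proof -
  assume h: "\<And>x. x \<bullet> u = x \<bullet> w"
  have "(u - w) \<bullet> (u - w) = 0" using h[of "u - w"] by (simp add: inner_diff_right)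
  then show "u = w" by simp
qed

lemma sint_sc_vscale: "sint (sc x (vscale c S)) g = (x \<bullet> c) * sint S g"
  unfolding sint_def sc_def vscale_def by (induction S) (auto simp: algebra_simps)

lemma sint_sc_append: "sint (sc x (L @ P)) g = sint (sc x L) g + sint (sc x P) g"
  by (simp add: sc_append sint_append)

lemma sint_diff:
  assumes AB: "A \<le> B" and S: "smeas_on {A..B} S" and "continuous_on {A..B} f" "continuous_on {A..B} g"
  shows "sint S (\<lambda>t. f t - g t) = sint S f - sint S g"
proof -
  have "sint S (\<lambda>t. f t - g t) + sint S g = sint S (\<lambda>t. (f t - g t) + g t)"
    by (rule sint_add[OF AB S, symmetric]) (use assms in \<open>auto intro!: continuous_intros\<close>)
  also have "\<dots> = sint S f" by simp
  finally show ?thesis by simp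
qed

lemma vint_cont:
  assumes AB: "A \<le> B" and L: "vmeas_on {A..B} L" and c: "continuous_on (U \<times> {A..B}) (\<lambda>(x, t). k x t)"
  shows "continuous_on U (\<lambda>x. vint L (k x) :: real^'m::finite)"
  using L unfolding vint_def
proof (induction L)
  case Nil then show ?case by (simp add: continuous_on_const)
next
  case (Cons p L)
  obtain v M where p: "p = (v, M)" by fastforce
  have M: "admissible_meas {A..B} M" using Cons.prems p by (auto simp: vmeas_on_def)
  have "continuous_on U (\<lambda>x. integral\<^sup>L M (k x))" by (rule adm_param_cont[OF M compact_Icc c])
  moreover have "vmeas_on {A..B} L" using Cons.prems by (auto simp: vmeas_on_def)
  ultimately show ?case using Cons.IH p by (auto intro!: continuous_intros)
qed

lemma zero_from_integrals:
  fixes G :: "real \<Rightarrow> real"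
  assumes AB: "A < B" and cG: "continuous_on {A..B} G"
    and z: "\<And>u. u \<in> {A..B} \<Longrightarrow> integral {A..u} G = 0" and t: "t \<in> {A..B}"
  shows "G t = 0"
proof -
  have d1: "((\<lambda>u. integral {A..u} G) has_vector_derivative G t) (at t within {A..B})"
    by (rule integral_has_vector_derivative[OF cG t])
  have d2: "((\<lambda>u. 0) has_vector_derivative G t) (at t within {A..B})"
    by (rule has_vector_derivative_transform[OF t _ d1]) (simp add: z)
  have d3: "((\<lambda>u. 0) has_vector_derivative 0) (at t within {A..B})"
    by (rule has_vector_derivative_const)
  have t': "t \<in> cbox A B" using t by simp
  have d2': "((\<lambda>u. 0) has_vector_derivative G t) (at t within cbox A B)" using d2 by simp
  have d3': "((\<lambda>u. 0) has_vector_derivative 0) (at t within cbox A B)" using d3 by simp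
  show ?thesis by (rule vector_derivative_unique_within_closed_interval[OF AB t' d2' d3'])
qed

lemma rk_alt2:
  assumes sym: "\<And>u v. u \<in> {a..b} \<Longrightarrow> v \<in> {a..b} \<Longrightarrow> K u v = K v u"
    and cK: "continuous_on ({a..b} \<times> {a..b}) (\<lambda>(u, v). K u v)"
    and t: "t \<in> {a..b}" and s: "s \<in> {a..b}"
  shows "rk a K t s = integral {a..s} (\<lambda>v. r1k a K v t)"
proof -
  have c: "continuous_on (cbox (a, a) (t, s)) (\<lambda>(u, v). K u v)"
    by (rule continuous_on_subset[OF cK]) (use t s in \<open>auto simp: cbox_Pair_eq\<close>)
  have "rk a K t s = integral (cbox a t) (\<lambda>u. integral (cbox a s) (K u))"
    by (simp add: rk_def)
  also have "\<dots> = integral (cbox a s) (\<lambda>v. integral (cbox a t) (\<lambda>u. K u v))"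
    by (rule integral_swap_continuous[OF c])
  also have "\<dots> = integral {a..s} (\<lambda>v. r1k a K v t)"
    unfolding r1k_def cbox_interval
    by (rule integral_cong, rule integral_cong) (use t s sym in auto)
  finally show ?thesis .
qed

lemma rk_sym:
  assumes sym: "\<And>u v. u \<in> {a..b} \<Longrightarrow> v \<in> {a..b} \<Longrightarrow> K u v = K v u"
    and cK: "continuous_on ({a..b} \<times> {a..b}) (\<lambda>(u, v). K u v)"
    and t: "t \<in> {a..b}" and s: "s \<in> {a..b}"
  shows "rk a K t s = rk a K s t"
  using rk_alt2[OF sym cK t s] by (simp add: rk_def r1k_def)

lemma fmat_vint:
  assumes AB: "A \<le> B" and L: "vmeas_on {A..B} L" and cF: "continuous_on {A..B} F"
  shows "vint L (\<lambda>t. z \<bullet> F t) = z v* fmat F (L :: ('m::finite) vmeas)"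
proof (rule vec_eq_dot)
  fix y :: "real^'m"
  have cFi: "continuous_on {A..B} (\<lambda>t. F t $ i)" for i
    by (rule continuous_on_compose2[OF linear_continuous_on[OF bounded_linear_vec_nth] cF]) auto
  have "y \<bullet> vint L (\<lambda>t. z \<bullet> F t) = sint (sc y L) (\<lambda>t. \<Sum>i\<in>UNIV. z $ i * F t $ i)"
    unfolding dot_vint by (simp add: inner_vec_def)
  also have "\<dots> = (\<Sum>i\<in>UNIV. sint (sc y L) (\<lambda>t. z $ i * F t $ i))"
    by (rule sint_sum[OF AB smeas_on_sc[OF L]]) (auto intro!: continuous_intros cFi)
  also have "\<dots> = (\<Sum>i\<in>UNIV. z $ i * (y \<bullet> vint L (\<lambda>t. F t $ i)))"
    by (simp add: sint_mult[OF AB] dot_vint)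
  also have "\<dots> = y \<bullet> (z v* fmat F L)"
    by (simp add: vector_matrix_mult_def fmat_def inner_vec_def sum_distrib_left mult_ac)
       (rule sum.swap)
  finally show "y \<bullet> vint L (\<lambda>t. z \<bullet> F t) = y \<bullet> (z v* fmat F L)" .
qed

lemma cov2_dot:
  "(x::real^'m::finite) \<bullet> (cov2 (rk a K) (r1k a K) K H0 H1 *v x) = Bq a K (sc x H0) (sc x H1) (sc x H0) (sc x H1)"
  by (simp add: cov2_def Bq_def matrix_vector_mult_add_rdistrib inner_add_right dot_dint)

lemma Bq_bilin:
  "Bq a K (P0 @ negs Q0) (P1 @ negs Q1) (P0 @ negs Q0) (P1 @ negs Q1) =
   Bq a K P0 P1 P0 P1 - Bq a K P0 P1 Q0 Q1 - Bq a K Q0 Q1 P0 P1 + Bq a K Q0 Q1 Q0 Q1"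
  by (simp add: Bq_def Dk_append1 Dk_append2 Dk_neg1 Dk_neg2 algebra_simps)



theorem theorem3p2:
  fixes a A B :: real
    and K :: "real \<Rightarrow> real \<Rightarrow> real"
    and f :: "real \<Rightarrow> real^'m::finite"
    and \<zeta>0 :: "'m vmeas"
    and \<eta>0 \<eta>1 :: smeas
  assumes "a \<le> A" and "A < B"
    and "cov_kernel {a..B} K"
    and "continuous_on ({a..B} \<times> {a..B}) (\<lambda>(t, s). K t s)"
    and "continuous_on {a..B} f"
    and "vmeas_on {A..B} \<zeta>0"
    and "\<forall>s\<in>{A..B}. vint \<zeta>0 (\<lambda>t. K t s) = f s"
    and "invertible (fmat f \<zeta>0)"
    and "smeas_on {A..B} \<eta>0" and "smeas_on {A..B} \<eta>1"
  defines "ft \<equiv> (\<lambda>t. integral {a..t} f)"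
    and "R \<equiv> (\<lambda>t s. integral {a..t} (\<lambda>u. integral {a..s} (\<lambda>v. K u v)))"
    and "R1 \<equiv> (\<lambda>t s. integral {a..s} (\<lambda>v. K t v))"
  assumes "\<forall>s\<in>{A..B}. sint \<eta>0 (\<lambda>t. R t s) + sint \<eta>1 (\<lambda>t. R1 t s) = 1"
  defines "c \<equiv> integral {a..A} (\<lambda>s. vint \<zeta>0 (\<lambda>t. K t s) - f s)"
  defines "\<zeta>t0 \<equiv> vscale (- c) \<eta>0"
    and "\<zeta>t1 \<equiv> vscale (- c) \<eta>1 @ \<zeta>0"
  defines "Ct \<equiv> fmat ft \<zeta>t0 + fmat f \<zeta>t1"
  assumes "invertible Ct"
  shows "blue2 {A..B} ft f R R1 K (mmul (matrix_inv Ct) \<zeta>t0) (mmul (matrix_inv Ct) \<zeta>t1)"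
proof -
  note aA = assms(1) and AB = assms(2) and cov = assms(3) and cf0 = assms(5) and Z0 = assms(6)
    and hz = assms(7) and E0 = assms(9) and E1 = assms(10) and heta = assms(14) and invC = assms(19)
  have ABle: "A \<le> B" using AB by simp
  have cK: "continuous_on ({a..B} \<times> {a..B}) (\<lambda>(u, v). K u v)" using assms(4) by simp
  have Ksym: "\<And>u v. u \<in> {a..B} \<Longrightarrow> v \<in> {a..B} \<Longrightarrow> K u v = K v u"
    using cov by (auto simp: cov_kernel_def)
  have inab: "\<And>t. t \<in> {A..B} \<Longrightarrow> t \<in> {a..B}" using aA by auto
  have RR: "R = rk a K" unfolding R_def by (simp add: fun_eq_iff rk_def)
  have RR1: "R1 = r1k a K" unfolding R1_def by (simp add: fun_eq_iff r1k_def)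
  note kc = kern_conts[OF aA AB cK]
  have Rsym: "\<And>t s. t \<in> {A..B} \<Longrightarrow> s \<in> {A..B} \<Longrightarrow> rk a K t s = rk a K s t"
    by (rule rk_sym[OF Ksym cK]) (use aA in auto)
  have eta: "\<And>u. u \<in> {A..B} \<Longrightarrow> sint \<eta>0 (\<lambda>s. rk a K s u) + sint \<eta>1 (\<lambda>s. r1k a K s u) = 1"
    using heta by (simp add: RR RR1)

  have cf: "continuous_on {A..B} f" by (rule continuous_on_subset[OF cf0]) (use aA in auto)
  have cft0: "continuous_on {a..B} ft"
    unfolding ft_def by (rule indefinite_integral_continuous_1, rule integrable_continuous_interval[OF cf0])
  have cft: "continuous_on {A..B} ft" by (rule continuous_on_subset[OF cft0]) (use aA in auto)
  have Zt0: "vmeas_on {A..B} \<zeta>t0" unfolding \<zeta>t0_def by (rule vmeas_on_vscale[OF E0])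
  have Zt1: "vmeas_on {A..B} \<zeta>t1" unfolding \<zeta>t1_def by (rule vmeas_on_append[OF vmeas_on_vscale[OF E1] Z0])
  have G0: "sint \<eta>0 (\<lambda>s. r1k a K t s) + sint \<eta>1 (\<lambda>s. K t s) = 0" if t: "t \<in> {A..B}" for t
  proof -
    define G where "G t = sint \<eta>0 (\<lambda>s. r1k a K t s) + sint \<eta>1 (\<lambda>s. K t s)" for t
    have cG: "continuous_on {A..B} G"
      unfolding G_def by (intro continuous_on_add sint_cont[OF ABle E0 kc(2)] sint_cont[OF ABle E1 kc(4)])
    have "integral {A..u} G = 0" if u: "u \<in> {A..B}" for u
    proof -
      have Au: "{A..u} \<subseteq> {A..B}" using u by auto
      have cr1v: "continuous_on {a..B} (\<lambda>v. r1k a K v s)" if "s \<in> {a..B}" for s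
        using cont_slice[OF cont_swap[OF r1k_cont[OF cK]] that] by simp
      have e0: "sint \<eta>0 (\<lambda>s. rk a K s u) - sint \<eta>0 (\<lambda>s. rk a K s A) = integral {A..u} (\<lambda>v. sint \<eta>0 (\<lambda>s. r1k a K v s))"
      proof -
        have cR: "continuous_on {A..B} (\<lambda>s. rk a K s w)" if "w \<in> {A..B}" for w
          using cont_slice[OF cont_swap[OF kc(1)] that] by simp
        have "sint \<eta>0 (\<lambda>s. rk a K s u) - sint \<eta>0 (\<lambda>s. rk a K s A) = sint \<eta>0 (\<lambda>s. rk a K s u - rk a K s A)"
          by (rule sint_diff[symmetric, OF ABle E0 cR cR]) (use u ABle in auto)
        also have "\<dots> = sint \<eta>0 (\<lambda>s. integral {A..u} (\<lambda>v. r1k a K v s))"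
        proof (rule sint_cong[OF ABle E0])
          fix s assume s: "s \<in> {A..B}"
          have i: "(\<lambda>v. r1k a K v s) integrable_on {a..u}"
            by (rule integrable_continuous_interval, rule continuous_on_subset[OF cr1v]) (use s u aA in auto)
          have "rk a K s u = integral {a..u} (\<lambda>v. r1k a K v s)"
            by (rule rk_alt2[OF Ksym cK]) (use s u aA in auto)
          moreover have "rk a K s A = integral {a..A} (\<lambda>v. r1k a K v s)"
            by (rule rk_alt2[OF Ksym cK]) (use s aA ABle in auto)
          moreover have "integral {a..A} (\<lambda>v. r1k a K v s) + integral {A..u} (\<lambda>v. r1k a K v s) = integral {a..u} (\<lambda>v. r1k a K v s)"
            by (rule Henstock_Kurzweil_Integration.integral_combine[OF aA _ i]) (use u in auto)
          ultimately show "rk a K s u - rk a K s A = integral {A..u} (\<lambda>v. r1k a K v s)" by simp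
        qed
        also have "\<dots> = integral {A..u} (\<lambda>v. sint \<eta>0 (\<lambda>s. r1k a K v s))"
          by (rule sint_interval_fubini[OF ABle E0]) (use u continuous_on_subset[OF kc(3)] Au in \<open>auto intro: continuous_on_subset[OF kc(3)]\<close>)
        finally show ?thesis .
      qed
      have e1: "sint \<eta>1 (\<lambda>s. r1k a K s u) - sint \<eta>1 (\<lambda>s. r1k a K s A) = integral {A..u} (\<lambda>v. sint \<eta>1 (\<lambda>s. K s v))"
      proof -
        have cR1: "continuous_on {A..B} (\<lambda>s. r1k a K s w)" if "w \<in> {A..B}" for w
          using cont_slice[OF cont_swap[OF kc(2)] that] by simp
        have "sint \<eta>1 (\<lambda>s. r1k a K s u) - sint \<eta>1 (\<lambda>s. r1k a K s A) = sint \<eta>1 (\<lambda>s. r1k a K s u - r1k a K s A)"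
          by (rule sint_diff[symmetric, OF ABle E1 cR1 cR1]) (use u ABle in auto)
        also have "\<dots> = sint \<eta>1 (\<lambda>s. integral {A..u} (\<lambda>v. K s v))"
        proof (rule sint_cong[OF ABle E1])
          fix s assume s: "s \<in> {A..B}"
          have i: "(\<lambda>v. K s v) integrable_on {a..u}"
            by (rule integrable_continuous_interval, rule continuous_on_subset[OF cont_slice[OF cK]]) (use s u aA in auto)
          have "integral {a..A} (\<lambda>v. K s v) + integral {A..u} (\<lambda>v. K s v) = integral {a..u} (\<lambda>v. K s v)"
            by (rule Henstock_Kurzweil_Integration.integral_combine[OF aA _ i]) (use u in auto)
          then show "r1k a K s u - r1k a K s A = integral {A..u} (\<lambda>v. K s v)" by (simp add: r1k_def)
        qed
        also have "\<dots> = integral {A..u} (\<lambda>v. sint \<eta>1 (\<lambda>s. K s v))"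
          by (rule sint_interval_fubini[OF ABle E1]) (use u in \<open>auto intro: continuous_on_subset[OF kc(4)]\<close>)
        finally show ?thesis .
      qed
      have c0: "continuous_on {A..u} (\<lambda>v. sint \<eta>0 (\<lambda>s. r1k a K v s))"
        by (rule continuous_on_subset[OF sint_cont[OF ABle E0 kc(2)] Au])
      have c1: "continuous_on {A..u} (\<lambda>v. sint \<eta>1 (\<lambda>s. K s v))"
        by (rule continuous_on_subset[OF sint_cont[OF ABle E1 cont_swap[OF kc(4)]] Au])
      have "integral {A..u} G = integral {A..u} (\<lambda>v. sint \<eta>0 (\<lambda>s. r1k a K v s) + sint \<eta>1 (\<lambda>s. K s v))"
      proof (rule integral_cong)
        fix v assume v: "v \<in> {A..u}"
        have "sint \<eta>1 (\<lambda>s. K v s) = sint \<eta>1 (\<lambda>s. K s v)"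
          by (rule sint_cong[OF ABle E1]) (use v u Ksym inab in auto)
        then show "G v = sint \<eta>0 (\<lambda>s. r1k a K v s) + sint \<eta>1 (\<lambda>s. K s v)" by (simp add: G_def)
      qed
      also have "\<dots> = integral {A..u} (\<lambda>v. sint \<eta>0 (\<lambda>s. r1k a K v s)) + integral {A..u} (\<lambda>v. sint \<eta>1 (\<lambda>s. K s v))"
        by (rule integral_add; rule integrable_continuous_interval) (use c0 c1 in auto)
      also have "\<dots> = 0" using e0 e1 eta[OF u] eta[of A] ABle by auto
      finally show ?thesis .
    qed
    then have "G t = 0" by (intro zero_from_integrals[OF AB cG _ t])
    then show ?thesis by (simp add: G_def)
  qed

  have scomp: "\<And>x L. vmeas_on {A..B} L \<Longrightarrow> smeas_on {A..B} (sc x L)" by (rule smeas_on_sc)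
  have I1: "sint (sc \<theta> \<zeta>t0) (\<lambda>s. rk a K t s) + sint (sc \<theta> \<zeta>t1) (\<lambda>s. r1k a K s t) = \<theta> \<bullet> ft t"
    if t: "t \<in> {A..B}" for \<theta> t
  proof -
    define \<phi> where "\<phi> v = sint (sc \<theta> \<zeta>0) (\<lambda>s. K s v)" for v
    have S: "smeas_on {A..B} (sc \<theta> \<zeta>0)" by (rule smeas_on_sc[OF Z0])
    have cKs: "continuous_on ({a..B} \<times> {A..B}) (\<lambda>(v, s). K s v)"
      by (rule continuous_on_subset[OF cont_swap[OF cK]]) (use aA in auto)
    have c\<phi>: "continuous_on {a..B} \<phi>" unfolding \<phi>_def by (rule sint_cont[OF ABle S cKs])
    have \<phi>f: "\<phi> v = \<theta> \<bullet> f v" if "v \<in> {A..B}" for v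
      using hz that by (simp add: \<phi>_def dot_vint[symmetric])
    have L0: "sint (sc \<theta> \<zeta>t0) (\<lambda>s. rk a K t s) = (\<theta> \<bullet> - c) * sint \<eta>0 (\<lambda>s. rk a K s t)"
    proof -
      have "sint \<eta>0 (\<lambda>s. rk a K t s) = sint \<eta>0 (\<lambda>s. rk a K s t)"
        by (rule sint_cong[OF ABle E0]) (use Rsym t in auto)
      then show ?thesis by (simp add: \<zeta>t0_def sint_sc_vscale)
    qed
    have L1: "sint (sc \<theta> \<zeta>t1) (\<lambda>s. r1k a K s t) = (\<theta> \<bullet> - c) * sint \<eta>1 (\<lambda>s. r1k a K s t) + sint (sc \<theta> \<zeta>0) (\<lambda>s. r1k a K s t)"
      by (simp add: \<zeta>t1_def sint_sc_append sint_sc_vscale)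
    have F: "sint (sc \<theta> \<zeta>0) (\<lambda>s. r1k a K s t) = integral {a..t} \<phi>"
      unfolding r1k_def \<phi>_def
      by (rule sint_interval_fubini[OF ABle S]) (use t aA in \<open>auto intro: continuous_on_subset[OF cK]\<close>)
    have ia: "\<phi> integrable_on {a..t}"
      by (rule integrable_continuous_interval, rule continuous_on_subset[OF c\<phi>]) (use t in auto)
    have cvz: "continuous_on {a..B} (\<lambda>s. vint \<zeta>0 (\<lambda>t. K t s))"
      by (rule vint_cont[OF ABle Z0 cKs])
    have iv: "(\<lambda>s. vint \<zeta>0 (\<lambda>t. K t s) - f s) integrable_on {a..A}"
      by (rule integrable_continuous_interval, rule continuous_on_subset[OF continuous_on_diff[OF cvz cf0]])
         (use ABle in auto)
    have ithf: "(\<lambda>s. \<theta> \<bullet> f s) integrable_on {a..B}"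
      by (intro integrable_continuous_interval continuous_intros cf0)
    have ithf': "(\<lambda>s. \<theta> \<bullet> f s) integrable_on {a..t}"
      by (rule integrable_on_subinterval[OF ithf]) (use t in auto)
    have cc: "\<theta> \<bullet> c = integral {a..A} \<phi> - integral {a..A} (\<lambda>s. \<theta> \<bullet> f s)"
    proof -
      have "\<theta> \<bullet> c = integral {a..A} ((\<lambda>x. \<theta> \<bullet> x) \<circ> (\<lambda>s. vint \<zeta>0 (\<lambda>t. K t s) - f s))"
        unfolding c_def by (rule integral_linear[OF iv bounded_linear_inner_right, symmetric])
      also have "\<dots> = integral {a..A} (\<lambda>s. \<phi> s - \<theta> \<bullet> f s)"
        by (simp add: o_def inner_diff_right \<phi>_def dot_vint)
      also have "\<dots> = integral {a..A} \<phi> - integral {a..A} (\<lambda>s. \<theta> \<bullet> f s)"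
        by (rule integral_diff; rule integrable_on_subinterval[OF integrable_continuous_interval])
           (use c\<phi> cf0 ABle in \<open>auto intro!: continuous_intros\<close>)
      finally show ?thesis .
    qed
    have ft1: "\<theta> \<bullet> ft t = integral {a..t} (\<lambda>s. \<theta> \<bullet> f s)"
    proof -
      have "f integrable_on {a..t}"
        by (rule integrable_on_subinterval[OF integrable_continuous_interval[OF cf0]]) (use t in auto)
      from integral_linear[OF this bounded_linear_inner_right, of \<theta>] show ?thesis
        by (simp add: ft_def o_def)
    qed
    have sp1: "integral {a..A} \<phi> + integral {A..t} \<phi> = integral {a..t} \<phi>"
      by (rule Henstock_Kurzweil_Integration.integral_combine[OF aA _ ia]) (use t in auto)
    have sp2: "integral {a..A} (\<lambda>s. \<theta> \<bullet> f s) + integral {A..t} (\<lambda>s. \<theta> \<bullet> f s) = integral {a..t} (\<lambda>s. \<theta> \<bullet> f s)"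
      by (rule Henstock_Kurzweil_Integration.integral_combine[OF aA _ ithf']) (use t in auto)
    have sp3: "integral {A..t} \<phi> = integral {A..t} (\<lambda>s. \<theta> \<bullet> f s)"
      by (rule integral_cong) (use t \<phi>f in auto)
    have "sint (sc \<theta> \<zeta>t0) (\<lambda>s. rk a K t s) + sint (sc \<theta> \<zeta>t1) (\<lambda>s. r1k a K s t) =
        (\<theta> \<bullet> - c) * (sint \<eta>0 (\<lambda>s. rk a K s t) + sint \<eta>1 (\<lambda>s. r1k a K s t)) + integral {a..t} \<phi>"
      by (simp add: L0 L1 F algebra_simps)
    also have "\<dots> = - (\<theta> \<bullet> c) + integral {a..t} \<phi>" using eta[OF t] by simp
    also have "\<dots> = \<theta> \<bullet> ft t" using cc ft1 sp1 sp2 sp3 by linarith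
    finally show ?thesis .
  qed
  have I2: "sint (sc \<theta> \<zeta>t0) (\<lambda>s. r1k a K t s) + sint (sc \<theta> \<zeta>t1) (\<lambda>s. K t s) = \<theta> \<bullet> f t"
    if t: "t \<in> {A..B}" for \<theta> t
  proof -
    have "sint (sc \<theta> \<zeta>0) (\<lambda>s. K t s) = sint (sc \<theta> \<zeta>0) (\<lambda>s. K s t)"
      by (rule sint_cong[OF ABle smeas_on_sc[OF Z0]]) (use t Ksym inab in auto)
    also have "\<dots> = \<theta> \<bullet> f t" using hz t by (simp add: dot_vint[symmetric])
    finally have e: "sint (sc \<theta> \<zeta>0) (\<lambda>s. K t s) = \<theta> \<bullet> f t" .
    have "sint (sc \<theta> \<zeta>t0) (\<lambda>s. r1k a K t s) + sint (sc \<theta> \<zeta>t1) (\<lambda>s. K t s) =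
       (\<theta> \<bullet> - c) * (sint \<eta>0 (\<lambda>s. r1k a K t s) + sint \<eta>1 (\<lambda>s. K t s)) + sint (sc \<theta> \<zeta>0) (\<lambda>s. K t s)"
      by (simp add: \<zeta>t0_def \<zeta>t1_def sint_sc_append sint_sc_vscale algebra_simps)
    also have "\<dots> = \<theta> \<bullet> f t" using G0[OF t] e by simp
    finally show ?thesis .
  qed

  have B1: "Bq a K S0 S1 (sc \<theta> \<zeta>t0) (sc \<theta> \<zeta>t1) = sint S0 (\<lambda>t. \<theta> \<bullet> ft t) + sint S1 (\<lambda>t. \<theta> \<bullet> f t)"
    if S0: "smeas_on {A..B} S0" and S1: "smeas_on {A..B} S1" for S0 S1 \<theta>
  proof -
    have T0: "smeas_on {A..B} (sc \<theta> \<zeta>t0)" by (rule smeas_on_sc[OF Zt0])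
    have T1: "smeas_on {A..B} (sc \<theta> \<zeta>t1)" by (rule smeas_on_sc[OF Zt1])
    have "Bq a K S0 S1 (sc \<theta> \<zeta>t0) (sc \<theta> \<zeta>t1) =
       sint S0 (\<lambda>t. sint (sc \<theta> \<zeta>t0) (rk a K t)) + sint S0 (\<lambda>t. sint (sc \<theta> \<zeta>t1) (\<lambda>s. r1k a K s t))
     + (sint S1 (\<lambda>t. sint (sc \<theta> \<zeta>t0) (r1k a K t)) + sint S1 (\<lambda>t. sint (sc \<theta> \<zeta>t1) (K t)))"
      unfolding Bq_def
      by (simp add: Dk_inner[OF ABle S0 T0 kc(1)] Dk_inner[OF ABle S0 T1 kc(3)]
          Dk_inner[OF ABle S1 T0 kc(2)] Dk_inner[OF ABle S1 T1 kc(4)])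
    also have "\<dots> = sint S0 (\<lambda>t. sint (sc \<theta> \<zeta>t0) (rk a K t) + sint (sc \<theta> \<zeta>t1) (\<lambda>s. r1k a K s t))
       + sint S1 (\<lambda>t. sint (sc \<theta> \<zeta>t0) (r1k a K t) + sint (sc \<theta> \<zeta>t1) (K t))"
      by (simp add: sint_add[OF ABle S0 sint_cont[OF ABle T0 kc(1)] sint_cont[OF ABle T1 kc(3)]]
          sint_add[OF ABle S1 sint_cont[OF ABle T0 kc(2)] sint_cont[OF ABle T1 kc(4)]])
    also have "\<dots> = sint S0 (\<lambda>t. \<theta> \<bullet> ft t) + sint S1 (\<lambda>t. \<theta> \<bullet> f t)"
      by (intro arg_cong2[where f="(+)"] sint_cong[OF ABle S0] sint_cong[OF ABle S1])
         (auto simp: I1[symmetric] I2[symmetric])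
    finally show ?thesis .
  qed
  have B2: "Bq a K S0 S1 T0 T1 = Bq a K T0 T1 S0 S1"
    if S0: "smeas_on {A..B} S0" and S1: "smeas_on {A..B} S1"
      and T0: "smeas_on {A..B} T0" and T1: "smeas_on {A..B} T1" for S0 S1 T0 T1
  proof -
    have "Dk (rk a K) S0 T0 = Dk (rk a K) T0 S0"
      unfolding Dk_swap[OF ABle S0 T0 kc(1)] by (rule Dk_cong[OF ABle T0 S0]) (use Rsym in auto)
    moreover have "Dk (\<lambda>t s. r1k a K s t) S0 T1 = Dk (r1k a K) T1 S0"
      using Dk_swap[OF ABle S0 T1 kc(3)] by simp
    moreover have "Dk (r1k a K) S1 T0 = Dk (\<lambda>t s. r1k a K s t) T0 S1"
      using Dk_swap[OF ABle S1 T0 kc(2)] by simp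
    moreover have "Dk K S1 T1 = Dk K T1 S1"
      unfolding Dk_swap[OF ABle S1 T1 kc(4)] by (rule Dk_cong[OF ABle T1 S1]) (use Ksym inab in auto)
    ultimately show ?thesis by (simp add: Bq_def)
  qed
  define Ci where "Ci = matrix_inv Ct"
  have CiC: "Ci ** Ct = mat 1"
  proof -
    have "Ct ** matrix_inv Ct = mat 1 \<and> matrix_inv Ct ** Ct = mat 1"
      using invC unfolding invertible_def matrix_inv_def by (rule someI_ex)
    then show ?thesis by (simp add: Ci_def)
  qed
  have UB: "Bq a K (sc x H0) (sc x H1) (sc x (mmul Ci \<zeta>t0)) (sc x (mmul Ci \<zeta>t1)) = x \<bullet> (transpose Ci *v x)"
    if H0: "vmeas_on {A..B} H0" and H1: "vmeas_on {A..B} H1" and U: "unbiased2 ft f H0 H1" for x H0 H1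
  proof -
    define z where "z = transpose Ci *v x"
    have "Bq a K (sc x H0) (sc x H1) (sc x (mmul Ci \<zeta>t0)) (sc x (mmul Ci \<zeta>t1)) =
        Bq a K (sc x H0) (sc x H1) (sc z \<zeta>t0) (sc z \<zeta>t1)" by (simp add: sc_mmul z_def)
    also have "\<dots> = sint (sc x H0) (\<lambda>t. z \<bullet> ft t) + sint (sc x H1) (\<lambda>t. z \<bullet> f t)"
      by (rule B1[OF smeas_on_sc[OF H0] smeas_on_sc[OF H1]])
    also have "\<dots> = x \<bullet> (vint H0 (\<lambda>t. z \<bullet> ft t) + vint H1 (\<lambda>t. z \<bullet> f t))"
      by (simp add: dot_vint inner_add_right)
    also have "\<dots> = x \<bullet> z" using U by (simp add: unbiased2_def)
    finally show ?thesis by (simp add: z_def)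
  qed
  have GU: "unbiased2 ft f (mmul Ci \<zeta>t0) (mmul Ci \<zeta>t1)"
    unfolding unbiased2_def
  proof (intro allI vec_eq_dot)
    fix \<theta> x :: "real^'m"
    define z where "z = transpose Ci *v x"
    have vmz: "z v* (fmat ft \<zeta>t0 + fmat f \<zeta>t1) = z v* fmat ft \<zeta>t0 + z v* fmat f \<zeta>t1"
      by (simp add: vector_matrix_mult_add_rdistrib)
    have "x \<bullet> (vint (mmul Ci \<zeta>t0) (\<lambda>t. \<theta> \<bullet> ft t) + vint (mmul Ci \<zeta>t1) (\<lambda>t. \<theta> \<bullet> f t)) =
        sint (sc z \<zeta>t0) (\<lambda>t. \<theta> \<bullet> ft t) + sint (sc z \<zeta>t1) (\<lambda>t. \<theta> \<bullet> f t)"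
      by (simp add: inner_add_right dot_vint sc_mmul z_def)
    also have "\<dots> = Bq a K (sc z \<zeta>t0) (sc z \<zeta>t1) (sc \<theta> \<zeta>t0) (sc \<theta> \<zeta>t1)"
      by (rule B1[OF smeas_on_sc[OF Zt0] smeas_on_sc[OF Zt1], symmetric])
    also have "\<dots> = Bq a K (sc \<theta> \<zeta>t0) (sc \<theta> \<zeta>t1) (sc z \<zeta>t0) (sc z \<zeta>t1)"
      by (rule B2) (intro smeas_on_sc Zt0 Zt1)+
    also have "\<dots> = sint (sc \<theta> \<zeta>t0) (\<lambda>t. z \<bullet> ft t) + sint (sc \<theta> \<zeta>t1) (\<lambda>t. z \<bullet> f t)"
      by (rule B1[OF smeas_on_sc[OF Zt0] smeas_on_sc[OF Zt1]])
    also have "\<dots> = \<theta> \<bullet> (vint \<zeta>t0 (\<lambda>t. z \<bullet> ft t) + vint \<zeta>t1 (\<lambda>t. z \<bullet> f t))"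
      by (simp add: dot_vint inner_add_right)
    also have "\<dots> = \<theta> \<bullet> (z v* Ct)"
      by (simp add: fmat_vint[OF ABle Zt0 cft] fmat_vint[OF ABle Zt1 cf] Ct_def vmz)
    also have "\<dots> = (Ct *v \<theta>) \<bullet> z"
      by (metis dot_transpose transpose_matrix_vector transpose_transpose)
    also have "\<dots> = x \<bullet> (Ci *v (Ct *v \<theta>))"
      by (simp add: z_def dot_transpose inner_commute)
    also have "\<dots> = x \<bullet> \<theta>" by (simp add: matrix_vector_mul_assoc CiC)
    finally show "x \<bullet> (vint (mmul Ci \<zeta>t0) (\<lambda>t. \<theta> \<bullet> ft t) + vint (mmul Ci \<zeta>t1) (\<lambda>t. \<theta> \<bullet> f t)) = x \<bullet> \<theta>" .
  qed
  have G0on: "vmeas_on {A..B} (mmul Ci \<zeta>t0)" by (rule vmeas_on_mmul[OF Zt0])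
  have G1on: "vmeas_on {A..B} (mmul Ci \<zeta>t1)" by (rule vmeas_on_mmul[OF Zt1])
  have "blue2 {A..B} ft f R R1 K (mmul Ci \<zeta>t0) (mmul Ci \<zeta>t1)"
    unfolding blue2_def
  proof (intro conjI allI impI G0on G1on GU)
    fix H0 H1 assume H: "vmeas_on {A..B} H0 \<and> vmeas_on {A..B} H1 \<and> unbiased2 ft f H0 H1"
    then have H0: "vmeas_on {A..B} H0" and H1: "vmeas_on {A..B} H1" and U: "unbiased2 ft f H0 H1" by auto
    show "psd (cov2 R R1 K H0 H1 - cov2 R R1 K (mmul Ci \<zeta>t0) (mmul Ci \<zeta>t1))"
      unfolding psd_def
    proof
      fix x :: "real^'m"
      define P0 where "P0 = sc x H0"
      define P1 where "P1 = sc x H1"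
      define Q0 where "Q0 = sc x (mmul Ci \<zeta>t0)"
      define Q1 where "Q1 = sc x (mmul Ci \<zeta>t1)"
      have P0o: "smeas_on {A..B} P0" unfolding P0_def by (rule smeas_on_sc[OF H0])
      have P1o: "smeas_on {A..B} P1" unfolding P1_def by (rule smeas_on_sc[OF H1])
      have Q0o: "smeas_on {A..B} Q0" unfolding Q0_def by (rule smeas_on_sc[OF G0on])
      have Q1o: "smeas_on {A..B} Q1" unfolding Q1_def by (rule smeas_on_sc[OF G1on])
      have PQ: "Bq a K P0 P1 Q0 Q1 = x \<bullet> (transpose Ci *v x)"
        unfolding P0_def P1_def Q0_def Q1_def by (rule UB[OF H0 H1 U])
      have QQ: "Bq a K Q0 Q1 Q0 Q1 = x \<bullet> (transpose Ci *v x)"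
        unfolding Q0_def Q1_def by (rule UB[OF G0on G1on GU])
      have QP: "Bq a K Q0 Q1 P0 P1 = Bq a K P0 P1 Q0 Q1" by (rule B2[OF Q0o Q1o P0o P1o])
      have "0 \<le> Bq a K (P0 @ negs Q0) (P1 @ negs Q1) (P0 @ negs Q0) (P1 @ negs Q1)"
        by (rule Bq_psd[OF aA AB _ _ cov cK]; intro smeas_on_append smeas_on_negs P0o P1o Q0o Q1o)
      also have "\<dots> = Bq a K P0 P1 P0 P1 - Bq a K Q0 Q1 Q0 Q1"
        unfolding Bq_bilin using PQ QQ QP by simp
      also have "\<dots> = x \<bullet> ((cov2 R R1 K H0 H1 - cov2 R R1 K (mmul Ci \<zeta>t0) (mmul Ci \<zeta>t1)) *v x)"
        by (simp add: matrix_vector_mult_diff_rdistrib inner_diff_right RR RR1 cov2_dot P0_def P1_def Q0_def Q1_def)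
      finally show "0 \<le> x \<bullet> ((cov2 R R1 K H0 H1 - cov2 R R1 K (mmul Ci \<zeta>t0) (mmul Ci \<zeta>t1)) *v x)" .
    qed
  qed
  then show ?thesis by (simp add: Ci_def)
qed


end
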